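(* Let $\alpha\in\Lambda$ and let $H_\alpha$ be the Hilbert space defined below. For each $j=1,\dots,d$ there is a unique bounded operator $\pi_\alpha(s_j)$ on $H_\alpha$ with $\pi_\alpha(s_j)e_\beta=e_{\sigma_j(\beta)}$ for all $\beta\sim\alpha$, and its adjoint satisfies \[ \pi_\alpha(s_j)^*e_\beta=\begin{cases}0,& \beta \text{ does not contain } j,\\ q(j,\beta)\,e_{\beta\setminus j},&\text{otherwise},\end{cases}\qquad \beta\sim\alpha. \] Moreover, the operators $\pi_\alpha(s_j)$ satisfy $\pi_\alpha(s_j)^*\pi_\alpha(s_j)=I$ and $\pi_\alpha(s_i)^*\pi_\alpha(s_j)=q_{ij}\pi_\alpha(s_j)\pi_\alpha(s_i)^*$ for $i\ne j$, hence define a $*$-representation $\pi_\alpha$ of $W$ on $H_\alpha$.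
   Context: Fix $d\ge 2$ and complex numbers $q_{ij}$, $1\le i\ne j\le d$, with $|q_{ij}|<1$ and $q_{ij}=\overline{q_{ji}}$. Let $W$ be the universal $C^*$-algebra generated by $s_1,\dots,s_d$ subject to $s_i^*s_i=I$ and $s_i^*s_j=q_{ij}s_js_i^*$ for $i\ne j$. Let $\Lambda_m=\{1,\dots,d\}^m$ ($\Lambda_0=\{\emptyset\}$), $\Lambda^0=\bigcup_m\Lambda_m$, $\Lambda=\{1,\dots,d\}^{\mathbb N}$; $s_\alpha=s_{\alpha_1}\cdots s_{\alpha_m}$, $s_\emptyset=I$. Shifts: $\sigma(\beta_1,\beta_2,\dots)=(\beta_2,\beta_3,\dots)$ and $\sigma_j(\beta_1,\beta_2,\dots)=(j,\beta_1,\beta_2,\dots)$. Infinite multiindices are equivalent, $\beta\sim\alpha$, if $\sigma^m(\beta)=\sigma^n(\alpha)$ for some $m,n\ge 0$. For an infinite $\beta$ containing $j$, write $\beta=(\beta' j\beta'')$ with $\beta'=(\beta'_1,\dots,\beta'_r)$ finite not containing $j$; then $q(j,\beta)=q_{j\beta'_1}\cdots q_{j\beta'_r}$ (empty product $=1$) and $\beta\setminus j=(\beta'\beta'')$. Fock representation: $\pi_F$ is the $*$-representation of $W$ on a Hilbert space $\mathcal F$ with unit vector $\Omega$, $\pi_F(s_j)^*\Omega=0$ for all $j$, such that $e_\gamma=\pi_F(s_\gamma)\Omega$, $\gamma\in\Lambda^0$, span a dense subspace. For $\gamma,\beta\in\Lambda_m$ let $q(\gamma,\beta)=\langle\pi_F(s_\gamma)^*\pi_F(s_\beta)\Omega,\Omega\rangle$,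 and for infinite $\gamma,\beta$ let $q(\gamma,\beta)=\lim_{m\to\infty}q((\gamma_1,\dots,\gamma_m),(\beta_1,\dots,\beta_m))$ (this limit exists). The space $H_\alpha$: for fixed $\alpha\in\Lambda$, let $\tilde H_\alpha$ be the vector space with basis the formal symbols $e_\beta$, $\beta\sim\alpha$, with the positive Hermitian form $(e_\beta,e_\gamma)=q(\gamma,\beta)$; $H_\alpha$ is the Hilbert space completion of $\tilde H_\alpha$ (after factoring out null vectors) with respect to this form. *)

theory Defs
  imports "HOL-Analysis.Analysis"
begin

text \<open>A complex inner product space: a real normed vector space carrying a compatible
complex scalar multiplication and a complex inner product, linear in the FIRST argument
(the convention of the paper: q(gamma,beta) = <s_gamma^* s_beta Omega, Omega> = <e_beta, e_gamma>),
whose norm is the one induced by the inner product.\<close>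

class complex_inner = real_normed_vector +
  fixes scaleC :: "complex \<Rightarrow> 'a \<Rightarrow> 'a"
    and cinner :: "'a \<Rightarrow> 'a \<Rightarrow> complex"
  assumes scaleC_add_right: "scaleC a (x + y) = scaleC a x + scaleC a y"
    and scaleC_add_left: "scaleC (a + b) x = scaleC a x + scaleC b x"
    and scaleC_scaleC: "scaleC a (scaleC b x) = scaleC (a * b) x"
    and scaleC_one: "scaleC 1 x = x"
    and scaleR_scaleC: "scaleR r x = scaleC (complex_of_real r) x"
    and cinner_add_left: "cinner (x + y) z = cinner x z + cinner y z"
    and cinner_scaleC_left: "cinner (scaleC a x) y = a * cinner x y"
    and cinner_commute: "cinner y x = cnj (cinner x y)"
    and cinner_norm: "cinner x x = complex_of_real ((norm x)\<^sup>2)"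

class chilbert = complex_inner + complete_space

definition bounded_clinear :: "('a::complex_inner \<Rightarrow> 'b::complex_inner) \<Rightarrow> bool" where
  "bounded_clinear T \<longleftrightarrow>
     (\<forall>x y. T (x + y) = T x + T y) \<and> (\<forall>c x. T (scaleC c x) = scaleC c (T x)) \<and>
     (\<exists>K. \<forall>x. norm (T x) \<le> norm x * K)"

definition cadjoint :: "('a::complex_inner \<Rightarrow> 'a) \<Rightarrow> ('a \<Rightarrow> 'a)" where
  "cadjoint T = (THE T'. \<forall>x y. cinner (T x) y = cinner x (T' y))"

definition cspan :: "'a::complex_inner set \<Rightarrow> 'a set" where
  "cspan S = {\<Sum>x\<in>F. scaleC (c x) x | F c. finite F \<and> F \<subseteq> S}"

text \<open>Finite multiindices are lists over {1..d}; infinite ones are sequences nat => nat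
with values in {1..d}.\<close>

definition Lam :: "nat \<Rightarrow> (nat \<Rightarrow> nat) set" where
  "Lam d = {\<beta>. \<forall>k. \<beta> k \<in> {1..d}}"

definition sigma :: "(nat \<Rightarrow> nat) \<Rightarrow> (nat \<Rightarrow> nat)" where
  "sigma \<beta> = (\<lambda>k. \<beta> (Suc k))"

definition sigma_j :: "nat \<Rightarrow> (nat \<Rightarrow> nat) \<Rightarrow> (nat \<Rightarrow> nat)" where
  "sigma_j j \<beta> = (\<lambda>k. case k of 0 \<Rightarrow> j | Suc k' \<Rightarrow> \<beta> k')"

definition mequiv :: "(nat \<Rightarrow> nat) \<Rightarrow> (nat \<Rightarrow> nat) \<Rightarrow> bool" where
  "mequiv \<beta> \<alpha> \<longleftrightarrow> (\<exists>m n. (sigma ^^ m) \<beta> = (sigma ^^ n) \<alpha>)"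

definition equiv_class :: "nat \<Rightarrow> (nat \<Rightarrow> nat) \<Rightarrow> (nat \<Rightarrow> nat) set" where
  "equiv_class d \<alpha> = {\<beta> \<in> Lam d. mequiv \<beta> \<alpha>}"

definition contains :: "nat \<Rightarrow> (nat \<Rightarrow> nat) \<Rightarrow> bool" where
  "contains j \<beta> \<longleftrightarrow> (\<exists>k. \<beta> k = j)"

text \<open>Position r of the first occurrence of j in beta; beta = (beta' j beta'') with
beta' = (beta 0, ..., beta (r-1)).\<close>
definition first_pos :: "nat \<Rightarrow> (nat \<Rightarrow> nat) \<Rightarrow> nat" where
  "first_pos j \<beta> = (LEAST k. \<beta> k = j)"

definition qj :: "(nat \<Rightarrow> nat \<Rightarrow> complex) \<Rightarrow> nat \<Rightarrow> (nat \<Rightarrow> nat) \<Rightarrow> complex" where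
  "qj q j \<beta> = (\<Prod>k<first_pos j \<beta>. q j (\<beta> k))"

definition remove_j :: "nat \<Rightarrow> (nat \<Rightarrow> nat) \<Rightarrow> (nat \<Rightarrow> nat)" where
  "remove_j j \<beta> = (\<lambda>k. if k < first_pos j \<beta> then \<beta> k else \<beta> (Suc k))"

text \<open>A *-representation of W on a Hilbert space is (by the universal property of W)
the same as a family S_1..S_d of bounded operators satisfying the defining relations.\<close>
definition W_rep :: "nat \<Rightarrow> (nat \<Rightarrow> nat \<Rightarrow> complex) \<Rightarrow> (nat \<Rightarrow> 'a::chilbert \<Rightarrow> 'a) \<Rightarrow> bool" where
  "W_rep d q S \<longleftrightarrow>
     (\<forall>j\<in>{1..d}. bounded_clinear (S j)) \<and>
     (\<forall>j\<in>{1..d}. cadjoint (S j) \<circ> S j = id) \<and>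
     (\<forall>i\<in>{1..d}. \<forall>j\<in>{1..d}. i \<noteq> j \<longrightarrow>
        cadjoint (S i) \<circ> S j = (\<lambda>x. scaleC (q i j) (S j (cadjoint (S i) x))))"

definition word_op :: "(nat \<Rightarrow> 'a \<Rightarrow> 'a) \<Rightarrow> nat list \<Rightarrow> 'a \<Rightarrow> 'a" where
  "word_op S w x = foldr S w x"

definition word_adj :: "(nat \<Rightarrow> 'a::complex_inner \<Rightarrow> 'a) \<Rightarrow> nat list \<Rightarrow> 'a \<Rightarrow> 'a" where
  "word_adj S w x = fold (\<lambda>j. cadjoint (S j)) w x"

definition fock_rep :: "nat \<Rightarrow> (nat \<Rightarrow> nat \<Rightarrow> complex) \<Rightarrow> (nat \<Rightarrow> 'a::chilbert \<Rightarrow> 'a) \<Rightarrow> 'a \<Rightarrow> bool" where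
  "fock_rep d q S \<Omega> \<longleftrightarrow>
     W_rep d q S \<and> norm \<Omega> = 1 \<and> (\<forall>j\<in>{1..d}. cadjoint (S j) \<Omega> = 0) \<and>
     closure (cspan {word_op S w \<Omega> | w. set w \<subseteq> {1..d}}) = UNIV"

definition qfin :: "(nat \<Rightarrow> 'a::chilbert \<Rightarrow> 'a) \<Rightarrow> 'a \<Rightarrow> nat list \<Rightarrow> nat list \<Rightarrow> complex" where
  "qfin S \<Omega> \<gamma> \<beta> = cinner (word_adj S \<gamma> (word_op S \<beta> \<Omega>)) \<Omega>"

definition qinf :: "(nat \<Rightarrow> 'a::chilbert \<Rightarrow> 'a) \<Rightarrow> 'a \<Rightarrow> (nat \<Rightarrow> nat) \<Rightarrow> (nat \<Rightarrow> nat) \<Rightarrow> complex" where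
  "qinf S \<Omega> \<gamma> \<beta> = lim (\<lambda>m. qfin S \<Omega> (map \<gamma> [0..<m]) (map \<beta> [0..<m]))"

text \<open>(H, e) is (a model of) H_alpha: e maps each beta ~ alpha to the class of the formal
basis vector e_beta in the completion. This is characterised up to unitary isomorphism by:
the Hermitian form is preserved, (e_beta, e_gamma) = q(gamma, beta), and the images span a
dense subspace of the complete space H.\<close>
definition is_H_alpha :: "nat \<Rightarrow> (nat \<Rightarrow> 'f::chilbert \<Rightarrow> 'f) \<Rightarrow> 'f \<Rightarrow> (nat \<Rightarrow> nat)
    \<Rightarrow> ((nat \<Rightarrow> nat) \<Rightarrow> 'h::chilbert) \<Rightarrow> bool" where
  "is_H_alpha d S \<Omega> \<alpha> e \<longleftrightarrow>
     (\<forall>\<beta>\<in>equiv_class d \<alpha>. \<forall>\<gamma>\<in>equiv_class d \<alpha>. cinner (e \<beta>) (e \<gamma>) = qinf S \<Omega> \<gamma> \<beta>) \<and>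
     closure (cspan (e ` equiv_class d \<alpha>)) = UNIV"

end

theory Submission
  imports Defs
begin


lemma scaleC_zero_left[simp]: "scaleC 0 x = (0::'a::complex_inner)"
  using scaleR_scaleC[of 0 x] by simp

lemma scaleC_zero_right[simp]: "scaleC a (0::'a::complex_inner) = 0"
proof -
  have "scaleC a (0::'a) = scaleC a 0 + scaleC a 0" by (metis add_0_left scaleC_add_right)
  then show ?thesis by (metis add_cancel_right_right)
qed

lemma scaleC_minus_right: "scaleC a (- x) = - scaleC a (x::'a::complex_inner)"
proof -
  have "scaleC a x + scaleC a (- x) = 0" by (metis scaleC_add_right scaleC_zero_right add.right_inverse)
  then show ?thesis by (metis add.commute eq_neg_iff_add_eq_0)
qed

lemma scaleC_diff_right: "scaleC a (x - y) = scaleC a x - scaleC a (y::'a::complex_inner)"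
  by (simp only: diff_conv_add_uminus scaleC_add_right scaleC_minus_right)

lemma scaleC_minus_left: "scaleC (- a) x = - scaleC a (x::'a::complex_inner)"
proof -
  have "scaleC a x + scaleC (- a) x = 0" by (metis scaleC_add_left scaleC_zero_left add.right_inverse)
  then show ?thesis by (metis add.commute eq_neg_iff_add_eq_0)
qed

lemma scaleC_diff_left: "scaleC (a - b) x = scaleC a x - scaleC b (x::'a::complex_inner)"
  by (simp only: diff_conv_add_uminus scaleC_add_left scaleC_minus_left)

lemma scaleC_sum_right: "scaleC a (sum f A) = (\<Sum>x\<in>A. scaleC a (f x::'a::complex_inner))"
  by (induct A rule: infinite_finite_induct) (simp_all add: scaleC_add_right)

lemma scaleC_sum_left: "scaleC (sum c A) x = (\<Sum>i\<in>A. scaleC (c i) (x::'a::complex_inner))"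
  by (induct A rule: infinite_finite_induct) (simp_all add: scaleC_add_left)

lemma scaleC_real: "scaleC (complex_of_real r) x = scaleR r (x::'a::complex_inner)"
  by (simp add: scaleR_scaleC)

lemma cinner_zero_left[simp]: "cinner (0::'a::complex_inner) y = 0"
proof -
  have "cinner (0::'a) y = cinner 0 y + cinner 0 y" by (metis add_0_left cinner_add_left)
  then show ?thesis by (metis add_cancel_right_right)
qed

lemma cinner_zero_right[simp]: "cinner x (0::'a::complex_inner) = 0"
proof -
  have "cinner x (0::'a) = cnj (cinner 0 x)" by (rule cinner_commute)
  then show ?thesis by simp
qed

lemma cinner_add_right: "cinner x (y + z) = cinner x y + cinner x (z::'a::complex_inner)"
proof -
  have "cinner x (y+z) = cnj (cinner (y+z) x)" by (rule cinner_commute)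
  also have "\<dots> = cnj (cinner y x) + cnj (cinner z x)" by (simp add: cinner_add_left)
  also have "\<dots> = cinner x y + cinner x z" by (simp add: cinner_commute[of x y] cinner_commute[of x z])
  finally show ?thesis .
qed

lemma cinner_scaleC_right: "cinner x (scaleC a y) = cnj a * cinner x (y::'a::complex_inner)"
proof -
  have "cinner x (scaleC a y) = cnj (cinner (scaleC a y) x)" by (rule cinner_commute)
  also have "\<dots> = cnj a * cnj (cinner y x)" by (simp add: cinner_scaleC_left)
  also have "\<dots> = cnj a * cinner x y" by (simp add: cinner_commute[of x y])
  finally show ?thesis .
qed

lemma cinner_minus_left: "cinner (- x) y = - cinner x (y::'a::complex_inner)"
proof -
  have "cinner x y + cinner (- x) y = 0" by (metis cinner_add_left cinner_zero_left add.right_inverse)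
  then show ?thesis by (metis add.commute eq_neg_iff_add_eq_0)
qed

lemma cinner_minus_right: "cinner x (- y) = - cinner x (y::'a::complex_inner)"
proof -
  have "cinner x y + cinner x (- y) = 0" by (metis cinner_add_right cinner_zero_right add.right_inverse)
  then show ?thesis by (metis add.commute eq_neg_iff_add_eq_0)
qed

lemma cinner_diff_left: "cinner (x - y) z = cinner x z - cinner y (z::'a::complex_inner)"
  by (simp only: diff_conv_add_uminus cinner_add_left cinner_minus_left)

lemma cinner_diff_right: "cinner x (y - z) = cinner x y - cinner x (z::'a::complex_inner)"
  by (simp only: diff_conv_add_uminus cinner_add_right cinner_minus_right)

lemma cinner_sum_left: "cinner (sum f A) y = (\<Sum>a\<in>A. cinner (f a) (y::'a::complex_inner))"
  by (induct A rule: infinite_finite_induct) (simp_all add: cinner_add_left)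

lemma cinner_sum_right: "cinner y (sum f A) = (\<Sum>a\<in>A. cinner y (f a::'a::complex_inner))"
  by (induct A rule: infinite_finite_induct) (simp_all add: cinner_add_right)

lemma cinner_self_zero_iff: "cinner x x = 0 \<longleftrightarrow> x = (0::'a::complex_inner)"
  by (simp add: cinner_norm)

lemma norm_scaleC: "norm (scaleC a x) = cmod a * norm (x::'a::complex_inner)"
proof -
  have "complex_of_real ((norm (scaleC a x))\<^sup>2) = cinner (scaleC a x) (scaleC a x)"
    by (rule cinner_norm[symmetric])
  also have "\<dots> = (a * cnj a) * cinner x x"
    by (simp add: cinner_scaleC_left cinner_scaleC_right mult.assoc)
  also have "\<dots> = complex_of_real ((cmod a)\<^sup>2) * complex_of_real ((norm x)\<^sup>2)"
    by (simp only: complex_norm_square cinner_norm)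
  also have "\<dots> = complex_of_real ((cmod a * norm x)\<^sup>2)"
    by (simp only: of_real_mult power_mult_distrib)
  finally have "(norm (scaleC a x))\<^sup>2 = (cmod a * norm x)\<^sup>2"
    using of_real_eq_iff by blast
  then show ?thesis
    by (simp add: power2_eq_iff_nonneg)
qed

lemma cs_expand:
  fixes x y :: "'a::complex_inner"
  assumes "y \<noteq> 0"
  shows "cinner (x - scaleC (cinner x y / complex_of_real ((norm y)\<^sup>2)) y)
                (x - scaleC (cinner x y / complex_of_real ((norm y)\<^sup>2)) y)
         = complex_of_real ((norm x)\<^sup>2 - (cmod (cinner x y))\<^sup>2 / (norm y)\<^sup>2)"
proof -
  define c where "c = cinner x y"
  define n where "n = (norm y)\<^sup>2"
  have n0: "n \<noteq> 0" using assms by (simp add: n_def)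
  have cyx: "cinner y x = cnj c" by (simp add: c_def cinner_commute[of y x])
  have cc: "c * cnj c = complex_of_real ((cmod c)\<^sup>2)" by (rule complex_norm_square[symmetric])
  have "cinner (x - scaleC (c / complex_of_real n) y) (x - scaleC (c / complex_of_real n) y)
     = complex_of_real ((norm x)\<^sup>2) - cnj c / complex_of_real n * c
       - c / complex_of_real n * cnj c
       + c / complex_of_real n * (cnj c / complex_of_real n * complex_of_real n)"
    by (simp add: cinner_diff_left cinner_diff_right cinner_scaleC_left cinner_scaleC_right
        cinner_norm[of x] cinner_norm[of y] c_def[symmetric] cyx n_def)
  also have "\<dots> = complex_of_real ((norm x)\<^sup>2) - c * cnj c / complex_of_real n"
    using n0 by (simp add: field_simps)
  also have "\<dots> = complex_of_real ((norm x)\<^sup>2 - (cmod c)\<^sup>2 / n)"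
    by (simp add: cc)
  finally show ?thesis by (simp add: c_def n_def)
qed

lemma cauchy_schwarz: "cmod (cinner x y) \<le> norm x * norm (y::'a::complex_inner)"
proof (cases "y = 0")
  case True then show ?thesis by simp
next
  case False
  define z where "z = x - scaleC (cinner x y / complex_of_real ((norm y)\<^sup>2)) y"
  have "complex_of_real ((norm z)\<^sup>2) = complex_of_real ((norm x)\<^sup>2 - (cmod (cinner x y))\<^sup>2 / (norm y)\<^sup>2)"
    using cs_expand[OF False, of x] by (simp add: z_def cinner_norm)
  then have "(norm z)\<^sup>2 = (norm x)\<^sup>2 - (cmod (cinner x y))\<^sup>2 / (norm y)\<^sup>2"
    using of_real_eq_iff by blast
  then have "0 \<le> (norm x)\<^sup>2 - (cmod (cinner x y))\<^sup>2 / (norm y)\<^sup>2" by (metis zero_le_power2)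
  then have "(cmod (cinner x y))\<^sup>2 / (norm y)\<^sup>2 \<le> (norm x)\<^sup>2" by simp
  then have "(cmod (cinner x y))\<^sup>2 \<le> (norm x)\<^sup>2 * (norm y)\<^sup>2"
    using False by (simp add: divide_le_eq)
  then have "(cmod (cinner x y))\<^sup>2 \<le> (norm x * norm y)\<^sup>2" by (simp add: power_mult_distrib)
  then show ?thesis by (simp add: power2_le_iff_abs_le)
qed

lemma bounded_bilinear_cinner: "bounded_bilinear (cinner :: 'a::complex_inner \<Rightarrow> 'a \<Rightarrow> complex)"
proof
  fix a a' b b' :: 'a and r :: real
  show "cinner (a + a') b = cinner a b + cinner a' b" by (rule cinner_add_left)
  show "cinner a (b + b') = cinner a b + cinner a b'" by (rule cinner_add_right)
  show "cinner (scaleR r a) b = scaleR r (cinner a b)"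
    by (simp add: scaleR_scaleC cinner_scaleC_left scaleR_conv_of_real)
  show "cinner a (scaleR r b) = scaleR r (cinner a b)"
    by (simp add: scaleR_scaleC cinner_scaleC_right scaleR_conv_of_real)
next
  show "\<exists>K. \<forall>a b. norm (cinner a b) \<le> norm (a::'a) * norm b * K"
    by (rule exI[of _ 1]) (simp add: cauchy_schwarz)
qed

lemmas tendsto_cinner = bounded_bilinear.tendsto[OF bounded_bilinear_cinner]

lemma continuous_cinner_left: "continuous_on UNIV (\<lambda>x::'a::complex_inner. cinner x y)"
proof -
  have "bounded_linear (\<lambda>x::'a. cinner x y)"
    by (rule bounded_bilinear.bounded_linear_left[OF bounded_bilinear_cinner])
  then show ?thesis by (rule linear_continuous_on)
qed

lemma continuous_cinner_right: "continuous_on UNIV (\<lambda>y::'a::complex_inner. cinner x y)"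
proof -
  have "bounded_linear (\<lambda>y::'a. cinner x y)"
    by (rule bounded_bilinear.bounded_linear_right[OF bounded_bilinear_cinner])
  then show ?thesis by (rule linear_continuous_on)
qed

lemma cinner_ext_right: "(\<And>x. cinner x a = cinner x b) \<Longrightarrow> a = (b::'a::complex_inner)"
proof -
  assume h: "\<And>x. cinner x a = cinner x b"
  have "cinner (a - b) (a - b) = 0" by (simp add: cinner_diff_right h)
  then show "a = b" by (simp add: cinner_self_zero_iff)
qed

lemma bclinear_linear: "bounded_clinear T \<Longrightarrow> bounded_linear T"
  unfolding bounded_clinear_def
  by (auto intro!: bounded_linear_intro simp: scaleR_scaleC)

lemma bclinear_bound:
  assumes "bounded_clinear T"
  obtains K where "K \<ge> 0" "\<And>x. norm (T x) \<le> norm x * K"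
proof -
  obtain K where K: "\<And>x. norm (T x) \<le> norm x * K" using assms unfolding bounded_clinear_def by blast
  have "norm (T x) \<le> norm x * max K 0" for x
    using K[of x] by (smt (verit) mult_left_mono norm_ge_zero)
  then show ?thesis using that[of "max K 0"] by simp
qed

lemma bclinear_add: "bounded_clinear T \<Longrightarrow> T (x + y) = T x + T y"
  unfolding bounded_clinear_def by blast
lemma bclinear_scaleC: "bounded_clinear T \<Longrightarrow> T (scaleC c x) = scaleC c (T x)"
  unfolding bounded_clinear_def by blast
lemma bclinear_zero: "bounded_clinear T \<Longrightarrow> T 0 = 0"
  using bclinear_scaleC[of T 0 0] by simp
lemma bclinear_diff: "bounded_clinear T \<Longrightarrow> T (x - y) = T x - T y"
proof -
  assume "bounded_clinear T"
  then have "T (x - y) + T y = T x" by (metis bclinear_add diff_add_cancel)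
  then show ?thesis by (simp add: eq_diff_eq)
qed
lemma bclinear_sum: "bounded_clinear T \<Longrightarrow> T (sum f A) = (\<Sum>a\<in>A. T (f a))"
  by (induct A rule: infinite_finite_induct) (simp_all add: bclinear_add bclinear_zero)
lemma bclinear_cont: "bounded_clinear T \<Longrightarrow> continuous_on S T"
  by (intro linear_continuous_on bclinear_linear)


lemma parallelogram:
  fixes u v :: "'a::complex_inner"
  shows "(norm (u + v))\<^sup>2 + (norm (u - v))\<^sup>2 = 2 * (norm u)\<^sup>2 + 2 * (norm v)\<^sup>2"
proof -
  have "complex_of_real ((norm (u + v))\<^sup>2 + (norm (u - v))\<^sup>2) = cinner (u+v) (u+v) + cinner (u-v) (u-v)"
    by (simp only: of_real_add cinner_norm)
  also have "\<dots> = 2 * cinner u u + 2 * cinner v v"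
    by (simp add: cinner_add_left cinner_add_right cinner_diff_left cinner_diff_right algebra_simps)
  also have "\<dots> = complex_of_real (2 * (norm u)\<^sup>2 + 2 * (norm v)\<^sup>2)"
    by (simp only: of_real_add of_real_mult cinner_norm of_real_numeral)
  finally show ?thesis using of_real_eq_iff by blast
qed

lemma riesz:
  fixes f :: "'a::chilbert \<Rightarrow> complex"
  assumes add: "\<And>x y. f (x + y) = f x + f y"
    and hom: "\<And>c x. f (scaleC c x) = c * f x"
    and bnd: "\<And>x. norm (f x) \<le> norm x * K"
  shows "\<exists>y. \<forall>x. f x = cinner x y"
proof (cases "\<forall>x. f x = 0")
  case True then show ?thesis by (intro exI[of _ 0]) simp
next
  case False
  then obtain x1 where x1: "f x1 \<noteq> 0" by auto
  define x0 where "x0 = scaleC (1 / f x1) x1"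
  have fx0: "f x0 = 1" using x1 by (simp add: x0_def hom)
  have f0: "f 0 = 0" using hom[of 0 0] by simp
  have fdiff: "f (x - y) = f x - f y" for x y
  proof -
    have "f (x - y) + f y = f x" by (metis add diff_add_cancel)
    then show ?thesis by (simp add: eq_diff_eq)
  qed
  have fR: "f (scaleR r x) = complex_of_real r * f x" for r x
    by (simp add: scaleR_scaleC hom)
  have blin: "bounded_linear f"
    by (rule bounded_linear_intro[where K=K]) (simp_all add: add fR scaleR_conv_of_real bnd)
  define N where "N = {x. f x = 0}"
  have clN: "closed N" unfolding N_def
    by (rule closed_Collect_eq) (auto intro: linear_continuous_on blin continuous_on_const)
  have N0: "0 \<in> N" by (simp add: N_def f0)
  have Nmid: "scaleR (1/2) (a + b) \<in> N" if "a \<in> N" "b \<in> N" for a b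
    using that by (simp add: N_def fR add)
  define \<delta> where "\<delta> = infdist x0 N"
  have \<delta>0: "0 \<le> \<delta>" by (simp add: \<delta>_def infdist_nonneg)
  have \<delta>le: "\<delta> \<le> dist x0 z" if "z \<in> N" for z using that by (simp add: \<delta>_def infdist_le)
  have "\<exists>z. z \<in> N \<and> dist x0 z < \<delta> + inverse (real (Suc n))" for n
  proof -
    have ne: "N \<noteq> {}" using N0 by auto
    then have d: "\<delta> = Inf (dist x0 ` N)" by (simp add: \<delta>_def infdist_notempty)
    have pos: "0 < inverse (real (Suc n))" by simp
    have "Inf (dist x0 ` N) < \<delta> + inverse (real (Suc n))" using d pos by linarith
    from cInf_lessD[OF _ this] ne obtain w where "w \<in> dist x0 ` N" "w < \<delta> + inverse (real (Suc n))"
      by auto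
    then show ?thesis by auto
  qed
  then obtain k where kk: "\<forall>n. k n \<in> N \<and> dist x0 (k n) < \<delta> + inverse (real (Suc n))"
    using choice[of "\<lambda>n z. z \<in> N \<and> dist x0 z < \<delta> + inverse (real (Suc n))"] by blast
  have kN: "k n \<in> N" for n using kk by blast
  have kd: "dist x0 (k n) < \<delta> + inverse (real (Suc n))" for n using kk by blast
  define \<epsilon> where "\<epsilon> n = inverse (real (Suc n))" for n
  have \<epsilon>0: "0 < \<epsilon> n" for n by (simp add: \<epsilon>_def)
  have \<epsilon>1: "\<epsilon> n \<le> 1" for n by (simp add: \<epsilon>_def inverse_le_1_iff)
  have \<epsilon>mono: "\<epsilon> n \<le> \<epsilon> M" if "M \<le> n" for M n
    using that by (simp add: \<epsilon>_def)
  have distb: "(dist (k m) (k n))\<^sup>2 \<le> 2 * (\<delta> + \<epsilon> m)\<^sup>2 + 2 * (\<delta> + \<epsilon> n)\<^sup>2 - 4 * \<delta>\<^sup>2" for m n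
  proof -
    define u where "u = x0 - k m"
    define v where "v = x0 - k n"
    define mid where "mid = scaleR (1/2) (k m + k n)"
    have midN: "mid \<in> N" using Nmid[OF kN kN] by (simp add: mid_def)
    have uv: "u + v = scaleR 2 (x0 - mid)"
      by (simp add: u_def v_def mid_def algebra_simps scaleR_2)
    have nuv: "norm (u + v) = 2 * dist x0 mid" by (simp add: uv dist_norm)
    have "2 * \<delta> \<le> norm (u + v)" using \<delta>le[OF midN] nuv by simp
    then have "(2 * \<delta>)\<^sup>2 \<le> (norm (u + v))\<^sup>2"
      using \<delta>0 by (intro power_mono) simp_all
    then have A: "4 * \<delta>\<^sup>2 \<le> (norm (u + v))\<^sup>2" by (simp add: power_mult_distrib)
    have B: "(norm u)\<^sup>2 \<le> (\<delta> + \<epsilon> m)\<^sup>2"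
      using kd[of m] by (intro power_mono) (simp_all add: u_def dist_norm \<epsilon>_def)
    have C: "(norm v)\<^sup>2 \<le> (\<delta> + \<epsilon> n)\<^sup>2"
      using kd[of n] by (intro power_mono) (simp_all add: v_def dist_norm \<epsilon>_def)
    have D: "norm (u - v) = dist (k m) (k n)"
      by (simp add: u_def v_def dist_norm norm_minus_commute)
    have D2: "(norm (u - v))\<^sup>2 = (dist (k m) (k n))\<^sup>2" by (simp only: D)
    show ?thesis using parallelogram[of u v] A B C D2 by linarith
  qed
  have cauchy: "Cauchy k"
  proof (rule CauchyI)
    fix e :: real assume e: "0 < e"
    have pos: "0 < e\<^sup>2 / (8 * \<delta> + 4)" using e \<delta>0 by simp
    obtain M where M: "inverse (real (Suc M)) < e\<^sup>2 / (8 * \<delta> + 4)"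
      using reals_Archimedean[OF pos] by blast
    have M': "(8 * \<delta> + 4) * \<epsilon> M < e\<^sup>2"
      using M \<delta>0 by (simp add: \<epsilon>_def field_simps)
    show "\<exists>M. \<forall>m\<ge>M. \<forall>n\<ge>M. norm (k m - k n) < e"
    proof (intro exI allI impI)
      fix m n assume mM: "M \<le> m" and nM: "M \<le> n"
      have em: "\<epsilon> m \<le> \<epsilon> M" "\<epsilon> n \<le> \<epsilon> M" using \<epsilon>mono mM nM by auto
      have sq1: "(\<epsilon> m)\<^sup>2 \<le> \<epsilon> m" using \<epsilon>0[of m] \<epsilon>1[of m]
        by (simp add: power2_eq_square mult_le_cancel_right1)
      have sq2: "(\<epsilon> n)\<^sup>2 \<le> \<epsilon> n" using \<epsilon>0[of n] \<epsilon>1[of n]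
        by (simp add: power2_eq_square mult_le_cancel_right1)
      have p1: "\<delta> * \<epsilon> m \<le> \<delta> * \<epsilon> M" using em \<delta>0 by (simp add: mult_left_mono)
      have p2: "\<delta> * \<epsilon> n \<le> \<delta> * \<epsilon> M" using em \<delta>0 by (simp add: mult_left_mono)
      have "(dist (k m) (k n))\<^sup>2 \<le> 2 * (\<delta> + \<epsilon> m)\<^sup>2 + 2 * (\<delta> + \<epsilon> n)\<^sup>2 - 4 * \<delta>\<^sup>2"
        by (rule distb)
      also have "\<dots> = 4 * (\<delta> * \<epsilon> m) + 2 * (\<epsilon> m)\<^sup>2 + 4 * (\<delta> * \<epsilon> n) + 2 * (\<epsilon> n)\<^sup>2"
        by (simp add: power2_sum algebra_simps)
      also have "\<dots> \<le> 8 * (\<delta> * \<epsilon> M) + 4 * \<epsilon> M"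
        using sq1 sq2 p1 p2 em by linarith
      also have "\<dots> < e\<^sup>2" using M' by (simp add: algebra_simps)
      finally have "(dist (k m) (k n))\<^sup>2 < e\<^sup>2" .
      then have "dist (k m) (k n) < e" using e by (simp add: power_less_imp_less_base)
      then show "norm (k m - k n) < e" by (simp add: dist_norm)
    qed
  qed
  then obtain k0 where lk: "k \<longlonglongrightarrow> k0"
    using Cauchy_convergent_iff convergent_def by blast
  have k0N: "k0 \<in> N" by (rule closed_sequentially[OF clN kN lk])
  have lim1: "(\<lambda>n. dist x0 (k n)) \<longlonglongrightarrow> dist x0 k0" by (intro tendsto_intros lk)
  have lim2: "(\<lambda>n. \<delta> + inverse (real (Suc n))) \<longlonglongrightarrow> \<delta>"
    using tendsto_add[OF tendsto_const LIMSEQ_inverse_real_of_nat, of \<delta>] by simp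
  have "dist x0 k0 \<le> \<delta>"
    by (rule LIMSEQ_le[OF lim1 lim2]) (use kd less_imp_le in blast)
  then have dk0: "dist x0 k0 = \<delta>" using \<delta>le[OF k0N] by simp
  define z where "z = x0 - k0"
  have fz: "f z = 1" using k0N fx0 by (simp add: z_def fdiff N_def)
  have nz: "norm z = \<delta>" using dk0 by (simp add: z_def dist_norm)
  have z0: "z \<noteq> 0" using fz f0 by auto
  have ortho: "cinner z w = 0" if wN: "w \<in> N" for w
  proof (rule ccontr)
    assume ne: "cinner z w \<noteq> 0"
    then have w0: "w \<noteq> 0" by auto
    define t where "t = cinner z w / complex_of_real ((norm w)\<^sup>2)"
    have "k0 + scaleC t w \<in> N" using k0N wN by (simp add: N_def add hom)
    then have "\<delta> \<le> dist x0 (k0 + scaleC t w)" by (rule \<delta>le)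
    also have "dist x0 (k0 + scaleC t w) = norm (z - scaleC t w)"
      by (simp add: z_def dist_norm algebra_simps)
    finally have le: "\<delta> \<le> norm (z - scaleC t w)" .
    have "complex_of_real ((norm (z - scaleC t w))\<^sup>2) = complex_of_real ((norm z)\<^sup>2 - (cmod (cinner z w))\<^sup>2 / (norm w)\<^sup>2)"
      using cs_expand[OF w0, of z] by (simp only: t_def cinner_norm)
    then have eq: "(norm (z - scaleC t w))\<^sup>2 = (norm z)\<^sup>2 - (cmod (cinner z w))\<^sup>2 / (norm w)\<^sup>2"
      using of_real_eq_iff by blast
    have "0 < (cmod (cinner z w))\<^sup>2 / (norm w)\<^sup>2" using ne w0 by simp
    then have "(norm (z - scaleC t w))\<^sup>2 < \<delta>\<^sup>2" using eq nz by simp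
    then have "norm (z - scaleC t w) < \<delta>" using \<delta>0 by (simp add: power_less_imp_less_base)
    then show False using le by simp
  qed
  have key: "cinner x z = f x * complex_of_real ((norm z)\<^sup>2)" for x
  proof -
    have "x - scaleC (f x) z \<in> N" by (simp add: N_def fdiff hom fz)
    then have "cinner z (x - scaleC (f x) z) = 0" by (rule ortho)
    then have "cinner (x - scaleC (f x) z) z = 0" by (metis cinner_commute complex_cnj_zero)
    then show ?thesis by (simp add: cinner_diff_left cinner_scaleC_left cinner_norm)
  qed
  define y where "y = scaleC (complex_of_real (1 / (norm z)\<^sup>2)) z"
  have "f x = cinner x y" for x
    using z0 by (simp add: y_def cinner_scaleC_right key)
  then show ?thesis by blast
qed

lemma adjoint_exists:
  fixes T :: "'a::chilbert \<Rightarrow> 'a"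
  assumes T: "bounded_clinear T"
  shows "\<exists>T'. \<forall>x y. cinner (T x) y = cinner x (T' y)"
proof -
  obtain K where K0: "K \<ge> 0" and K: "\<And>x. norm (T x) \<le> norm x * K"
    using bclinear_bound[OF T] by blast
  have "\<exists>y'. \<forall>x. cinner (T x) y = cinner x y'" for y
  proof (rule riesz[where K="K * norm y"])
    fix x1 x2 show "cinner (T (x1 + x2)) y = cinner (T x1) y + cinner (T x2) y"
      by (simp add: bclinear_add[OF T] cinner_add_left)
  next
    fix c x show "cinner (T (scaleC c x)) y = c * cinner (T x) y"
      by (simp add: bclinear_scaleC[OF T] cinner_scaleC_left)
  next
    fix x
    have "cmod (cinner (T x) y) \<le> norm (T x) * norm y" by (rule cauchy_schwarz)
    also have "\<dots> \<le> norm x * K * norm y" by (intro mult_right_mono K norm_ge_zero)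
    finally show "cmod (cinner (T x) y) \<le> norm x * (K * norm y)" by (simp add: mult.assoc)
  qed
  then have "\<forall>y. \<exists>y'. \<forall>x. cinner (T x) y = cinner x y'" by blast
  then obtain T' where "\<forall>y. \<forall>x. cinner (T x) y = cinner x (T' y)"
    using choice[of "\<lambda>y y'. \<forall>x. cinner (T x) y = cinner x y'"] by blast
  then show ?thesis by blast
qed

lemma cadjoint_eqI:
  fixes T :: "'a::chilbert \<Rightarrow> 'a"
  assumes h: "\<And>x y. cinner (T x) y = cinner x (T' y)"
  shows "cadjoint T = T'"
  unfolding cadjoint_def
proof (rule the_equality)
  show "\<forall>x y. cinner (T x) y = cinner x (T' y)" using h by blast
  fix T2 assume h2: "\<forall>x y. cinner (T x) y = cinner x (T2 y)"
  show "T2 = T'"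
  proof (rule ext, rule cinner_ext_right)
    fix y x show "cinner x (T2 y) = cinner x (T' y)" using h h2 by metis
  qed
qed

lemma cadjoint_prop:
  fixes T :: "'a::chilbert \<Rightarrow> 'a"
  assumes T: "bounded_clinear T"
  shows "cinner (T x) y = cinner x (cadjoint T y)"
proof -
  obtain T' where T': "\<forall>x y. cinner (T x) y = cinner x (T' y)" using adjoint_exists[OF T] by blast
  have "cadjoint T = T'" by (rule cadjoint_eqI) (use T' in blast)
  then show ?thesis using T' by simp
qed

lemma cadjoint_bclinear:
  fixes T :: "'a::chilbert \<Rightarrow> 'a"
  assumes T: "bounded_clinear T"
  shows "bounded_clinear (cadjoint T)"
proof -
  let ?A = "cadjoint T"
  obtain K where K0: "K \<ge> 0" and K: "\<And>x. norm (T x) \<le> norm x * K"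
    using bclinear_bound[OF T] by blast
  have add: "?A (y + z) = ?A y + ?A z" for y z
  proof (rule cinner_ext_right)
    fix x show "cinner x (?A (y + z)) = cinner x (?A y + ?A z)"
      by (simp add: cadjoint_prop[OF T, symmetric] cinner_add_right)
  qed
  have sc: "?A (scaleC c y) = scaleC c (?A y)" for c y
  proof (rule cinner_ext_right)
    fix x show "cinner x (?A (scaleC c y)) = cinner x (scaleC c (?A y))"
      by (simp add: cadjoint_prop[OF T, symmetric] cinner_scaleC_right)
  qed
  have bd: "norm (?A y) \<le> norm y * K" for y
  proof (cases "?A y = 0")
    case True then show ?thesis using K0 by simp
  next
    case False
    have "complex_of_real ((norm (?A y))\<^sup>2) = cinner (?A y) (?A y)" by (rule cinner_norm[symmetric])
    also have "\<dots> = cinner (T (?A y)) y" by (rule cadjoint_prop[OF T, symmetric])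
    finally have "(norm (?A y))\<^sup>2 = cmod (cinner (T (?A y)) y)"
      by (metis norm_of_real abs_of_nonneg zero_le_power2)
    also have "\<dots> \<le> norm (T (?A y)) * norm y" by (rule cauchy_schwarz)
    also have "\<dots> \<le> norm (?A y) * K * norm y" by (intro mult_right_mono K norm_ge_zero)
    finally have "norm (?A y) * norm (?A y) \<le> norm (?A y) * (norm y * K)"
      by (simp add: power2_eq_square algebra_simps)
    then show ?thesis using False by (simp add: mult_le_cancel_left)
  qed
  show ?thesis unfolding bounded_clinear_def using add sc bd by blast
qed


lemma sum_extend:
  assumes "finite H" "F \<subseteq> H"
  shows "(\<Sum>a\<in>F. scaleC (c a) (u a)) = (\<Sum>a\<in>H. scaleC (if a \<in> F then c a else 0) (u a::'a::complex_inner))"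
  by (rule sum.mono_neutral_cong_left) (use assms in auto)

lemma sum_combine:
  fixes u :: "'i \<Rightarrow> 'a::complex_inner"
  assumes "finite F" "finite G"
  shows "(\<Sum>a\<in>F. scaleC (c a) (u a)) + (\<Sum>a\<in>G. scaleC (d a) (u a))
       = (\<Sum>a\<in>F\<union>G. scaleC ((if a\<in>F then c a else 0) + (if a\<in>G then d a else 0)) (u a))"
proof -
  have 1: "(\<Sum>a\<in>F. scaleC (c a) (u a)) = (\<Sum>a\<in>F\<union>G. scaleC (if a\<in>F then c a else 0) (u a))"
    by (rule sum_extend) (use assms in auto)
  have 2: "(\<Sum>a\<in>G. scaleC (d a) (u a)) = (\<Sum>a\<in>F\<union>G. scaleC (if a\<in>G then d a else 0) (u a))"
    by (rule sum_extend) (use assms in auto)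
  show ?thesis unfolding 1 2 by (simp add: sum.distrib[symmetric] scaleC_add_left)
qed

lemma sum_scale:
  "scaleC k (\<Sum>a\<in>F. scaleC (c a) (u a)) = (\<Sum>a\<in>F. scaleC (k * c a) (u a::'a::complex_inner))"
  by (simp add: scaleC_sum_right scaleC_scaleC)

lemma cspanI:
  assumes "finite F" "F \<subseteq> S" "v = (\<Sum>x\<in>F. scaleC (c x) x)"
  shows "v \<in> cspan S"
  unfolding cspan_def using assms by blast

lemma cspanE:
  assumes "v \<in> cspan S"
  obtains F c where "finite F" "F \<subseteq> S" "v = (\<Sum>x\<in>F. scaleC (c x) x)"
  using assms unfolding cspan_def by blast

lemma cspan_add:
  assumes "a \<in> cspan S" "b \<in> cspan S" shows "a + b \<in> cspan S"
proof -
  obtain F c where F: "finite F" "F \<subseteq> S" "a = (\<Sum>x\<in>F. scaleC (c x) x)"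
    using assms(1) unfolding cspan_def by blast
  obtain G d where G: "finite G" "G \<subseteq> S" "b = (\<Sum>x\<in>G. scaleC (d x) x)"
    using assms(2) unfolding cspan_def by blast
  have "a + b = (\<Sum>x\<in>F\<union>G. scaleC ((if x\<in>F then c x else 0) + (if x\<in>G then d x else 0)) x)"
    using sum_combine[OF F(1) G(1), of c "\<lambda>x. x" d] F G by simp
  then show ?thesis
    by (rule cspanI[where F="F\<union>G" and c="\<lambda>x. (if x\<in>F then c x else 0) + (if x\<in>G then d x else 0)", rotated 2])
       (use F G in auto)
qed

lemma cspan_scale:
  assumes "a \<in> cspan S" shows "scaleC k a \<in> cspan S"
proof -
  obtain F c where F: "finite F" "F \<subseteq> S" "a = (\<Sum>x\<in>F. scaleC (c x) x)"
    using assms(1) unfolding cspan_def by blast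
  have "scaleC k a = (\<Sum>x\<in>F. scaleC (k * c x) x)" using F sum_scale[of k c "\<lambda>x. x"] by simp
  then show ?thesis
    by (rule cspanI[where F=F and c="\<lambda>x. k * c x", rotated 2]) (use F in auto)
qed

lemma cspan_superset:
  assumes "x \<in> S" shows "x \<in> cspan S"
proof -
  have "x = (\<Sum>y\<in>{x}. scaleC ((\<lambda>_. 1) y) y)" by (simp add: scaleC_one)
  then show ?thesis
    by (rule cspanI[where F="{x}", rotated 2]) (use assms in auto)
qed

lemma bclinear_on_cspan:
  assumes L1: "bounded_clinear L1" and L2: "bounded_clinear L2" and eq: "\<forall>x\<in>X. L1 x = L2 x"
    and v: "v \<in> cspan X"
  shows "L1 v = L2 v"
proof -
  obtain F c where F: "finite F" "F \<subseteq> X" "v = (\<Sum>x\<in>F. scaleC (c x) x)"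
    using v unfolding cspan_def by blast
  have "L1 v = (\<Sum>x\<in>F. scaleC (c x) (L1 x))" by (simp add: F(3) bclinear_sum[OF L1] bclinear_scaleC[OF L1])
  also have "\<dots> = (\<Sum>x\<in>F. scaleC (c x) (L2 x))" using F eq by (intro sum.cong) auto
  also have "\<dots> = L2 v" by (simp add: F(3) bclinear_sum[OF L2] bclinear_scaleC[OF L2])
  finally show ?thesis .
qed

lemma dense_eq:
  fixes L1 L2 :: "'a::complex_inner \<Rightarrow> 'b::complex_inner"
  assumes L1: "bounded_clinear L1" and L2: "bounded_clinear L2"
    and dense: "closure (cspan X) = UNIV" and eq: "\<forall>x\<in>X. L1 x = L2 x"
  shows "L1 = L2"
proof -
  have sub: "cspan X \<subseteq> {x. L1 x = L2 x}" using bclinear_on_cspan[OF L1 L2 eq] by blast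
  have cl: "closed {x. L1 x = L2 x}"
    by (rule closed_Collect_eq) (simp_all add: bclinear_cont L1 L2)
  have "closure (cspan X) \<subseteq> {x. L1 x = L2 x}" by (rule closure_minimal[OF sub cl])
  then show ?thesis using dense by auto
qed

lemma dense_cinner_right:
  fixes a b :: "'a::complex_inner"
  assumes dense: "closure (cspan X) = UNIV" and eq: "\<forall>x\<in>X. cinner x a = cinner x b"
  shows "a = b"
proof -
  have sub: "cspan X \<subseteq> {x. cinner x a = cinner x b}"
  proof
    fix v assume "v \<in> cspan X"
    then obtain F c where F: "finite F" "F \<subseteq> X" "v = (\<Sum>x\<in>F. scaleC (c x) x)"
      unfolding cspan_def by blast
    have "cinner v a = (\<Sum>x\<in>F. c x * cinner x a)" by (simp add: F(3) cinner_sum_left cinner_scaleC_left)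
    also have "\<dots> = (\<Sum>x\<in>F. c x * cinner x b)" using F eq by (intro sum.cong) auto
    also have "\<dots> = cinner v b" by (simp add: F(3) cinner_sum_left cinner_scaleC_left)
    finally show "v \<in> {x. cinner x a = cinner x b}" by simp
  qed
  have cl: "closed {x. cinner x a = cinner x b}"
    by (rule closed_Collect_eq) (simp_all add: continuous_cinner_left)
  have "closure (cspan X) \<subseteq> {x. cinner x a = cinner x b}" by (rule closure_minimal[OF sub cl])
  then have "\<forall>x. cinner x a = cinner x b" using dense by auto
  then show ?thesis by (intro cinner_ext_right) blast
qed

lemma bounded_linear_scaleC: "bounded_linear (\<lambda>x::'a::complex_inner. scaleC c x)"
proof (rule bounded_linear_intro[where K="cmod c"])
  fix x y :: 'a show "scaleC c (x + y) = scaleC c x + scaleC c y" by (rule scaleC_add_right)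
next
  fix r and x :: 'a show "scaleC c (scaleR r x) = scaleR r (scaleC c x)"
    by (simp add: scaleR_scaleC scaleC_scaleC mult.commute)
next
  fix x :: 'a show "norm (scaleC c x) \<le> norm x * cmod c" by (simp add: norm_scaleC mult.commute)
qed

lemma tendsto_scaleC: "(f \<longlongrightarrow> l) F \<Longrightarrow> ((\<lambda>n. scaleC c (f n)) \<longlongrightarrow> scaleC c (l::'a::complex_inner)) F"
  by (rule bounded_linear.tendsto[OF bounded_linear_scaleC])

lemma index_rep:
  assumes "v \<in> cspan (u ` I)"
  shows "\<exists>F c. finite F \<and> F \<subseteq> I \<and> v = (\<Sum>a\<in>F. scaleC (c a) (u a))"
proof -
  obtain F' c' where F': "finite F'" "F' \<subseteq> u ` I" "v = (\<Sum>x\<in>F'. scaleC (c' x) x)"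
    using assms by (rule cspanE)
  define g where "g x = (SOME a. a \<in> I \<and> u a = x)" for x
  have g: "g x \<in> I \<and> u (g x) = x" if "x \<in> F'" for x
  proof -
    have "\<exists>a. a \<in> I \<and> u a = x" using F'(2) that by blast
    then show ?thesis unfolding g_def by (rule someI_ex)
  qed
  have inj: "inj_on g F'"
  proof (rule inj_onI)
    fix x y assume xy: "x \<in> F'" "y \<in> F'" "g x = g y"
    have "x = u (g x)" using g[OF xy(1)] by simp
    also have "\<dots> = u (g y)" using xy(3) by simp
    also have "\<dots> = y" using g[OF xy(2)] by simp
    finally show "x = y" .
  qed
  have "(\<Sum>a\<in>g ` F'. scaleC (c' (u a)) (u a)) = (\<Sum>x\<in>F'. scaleC (c' (u (g x))) (u (g x)))"
    using sum.reindex[OF inj, of "\<lambda>a. scaleC (c' (u a)) (u a)"] by (simp add: comp_def)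
  also have "\<dots> = (\<Sum>x\<in>F'. scaleC (c' x) x)"
  proof (rule sum.cong[OF refl])
    fix x assume "x \<in> F'" then show "scaleC (c' (u (g x))) (u (g x)) = scaleC (c' x) x" using g by simp
  qed
  finally have "v = (\<Sum>a\<in>g ` F'. scaleC (c' (u a)) (u a))" using F'(3) by simp
  moreover have "finite (g ` F')" "g ` F' \<subseteq> I" using F'(1) g by auto
  ultimately show ?thesis
    by (intro exI[of _ "g ` F'"] exI[of _ "\<lambda>a. c' (u a)"]) simp
qed

lemma index_in_cspan:
  fixes u :: "'i \<Rightarrow> 'a::complex_inner"
  assumes "finite F" "F \<subseteq> I"
  shows "(\<Sum>a\<in>F. scaleC (c a) (u a)) \<in> cspan (u ` I)"
  using assms
proof (induction F rule: finite_induct)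
  case empty
  have "(0::'a) \<in> cspan (u ` I)" by (rule cspanI[where F="{}" and c="\<lambda>_. 1"]) simp_all
  then show ?case by simp
next
  case (insert x F)
  then have "(\<Sum>a\<in>insert x F. scaleC (c a) (u a)) = scaleC (c x) (u x) + (\<Sum>a\<in>F. scaleC (c a) (u a))"
    by simp
  moreover have "scaleC (c x) (u x) \<in> cspan (u ` I)"
    using insert by (intro cspan_scale cspan_superset) auto
  ultimately show ?case using insert by (simp add: cspan_add)
qed

lemma cinner_sums:
  "cinner (\<Sum>a\<in>F. scaleC (c a) (x a)) (\<Sum>b\<in>G. scaleC (d b) (y b))
   = (\<Sum>a\<in>F. \<Sum>b\<in>G. c a * (cnj (d b) * cinner (x a) (y b::'a::complex_inner)))"
proof -
  have "cinner (\<Sum>a\<in>F. scaleC (c a) (x a)) (\<Sum>b\<in>G. scaleC (d b) (y b))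
      = (\<Sum>a\<in>F. c a * cinner (x a) (\<Sum>b\<in>G. scaleC (d b) (y b)))"
    by (simp only: cinner_sum_left cinner_scaleC_left)
  also have "\<dots> = (\<Sum>a\<in>F. c a * (\<Sum>b\<in>G. cnj (d b) * cinner (x a) (y b)))"
    by (simp only: cinner_sum_right cinner_scaleC_right)
  also have "\<dots> = (\<Sum>a\<in>F. \<Sum>b\<in>G. c a * (cnj (d b) * cinner (x a) (y b)))"
    by (simp only: sum_distrib_left)
  finally show ?thesis .
qed

lemma isometric_extension:
  fixes u w :: "'i \<Rightarrow> 'a::chilbert"
  assumes dense: "closure (cspan (u ` I)) = UNIV"
    and ip: "\<And>a b. a \<in> I \<Longrightarrow> b \<in> I \<Longrightarrow> cinner (w a) (w b) = cinner (u a) (u b)"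
  shows "\<exists>T. bounded_clinear T \<and> (\<forall>a\<in>I. T (u a) = w a)"
proof -
  let ?V = "cspan (u ` I)"
  have normeq: "norm (\<Sum>a\<in>F. scaleC (c a) (w a)) = norm (\<Sum>a\<in>F. scaleC (c a) (u a))"
    if F: "finite F" "F \<subseteq> I" for F c
  proof -
    have "cinner (\<Sum>a\<in>F. scaleC (c a) (w a)) (\<Sum>a\<in>F. scaleC (c a) (w a))
        = (\<Sum>a\<in>F. \<Sum>b\<in>F. c a * (cnj (c b) * cinner (w a) (w b)))"
      by (rule cinner_sums)
    also have "\<dots> = (\<Sum>a\<in>F. \<Sum>b\<in>F. c a * (cnj (c b) * cinner (u a) (u b)))"
      using F ip by (intro sum.cong refl) auto
    also have "\<dots> = cinner (\<Sum>a\<in>F. scaleC (c a) (u a)) (\<Sum>a\<in>F. scaleC (c a) (u a))"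
      by (rule cinner_sums[symmetric])
    finally have "(norm (\<Sum>a\<in>F. scaleC (c a) (w a)))\<^sup>2 = (norm (\<Sum>a\<in>F. scaleC (c a) (u a)))\<^sup>2"
      by (simp only: cinner_norm of_real_eq_iff)
    then show ?thesis by (simp add: power2_eq_iff_nonneg)
  qed
  have wd: "(\<Sum>a\<in>F. scaleC (c a) (w a)) = (\<Sum>a\<in>G. scaleC (d a) (w a))"
    if F: "finite F" "F \<subseteq> I" and G: "finite G" "G \<subseteq> I"
      and eq: "(\<Sum>a\<in>F. scaleC (c a) (u a)) = (\<Sum>a\<in>G. scaleC (d a) (u a))" for F G c d
  proof -
    define e where "e a = (if a\<in>F then c a else 0) + (if a\<in>G then - d a else 0)" for a
    have neg: "- (\<Sum>a\<in>G. scaleC (d a) (v a)) = (\<Sum>a\<in>G. scaleC (- d a) (v a))" for v :: "'i \<Rightarrow> 'a"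
      by (simp add: sum_negf[symmetric] scaleC_minus_left)
    have cu: "(\<Sum>a\<in>F. scaleC (c a) (u a)) - (\<Sum>a\<in>G. scaleC (d a) (u a)) = (\<Sum>a\<in>F\<union>G. scaleC (e a) (u a))"
      unfolding diff_conv_add_uminus neg[of u] e_def by (rule sum_combine[OF F(1) G(1)])
    have cw: "(\<Sum>a\<in>F. scaleC (c a) (w a)) - (\<Sum>a\<in>G. scaleC (d a) (w a)) = (\<Sum>a\<in>F\<union>G. scaleC (e a) (w a))"
      unfolding diff_conv_add_uminus neg[of w] e_def by (rule sum_combine[OF F(1) G(1)])
    have "norm (\<Sum>a\<in>F\<union>G. scaleC (e a) (w a)) = norm (\<Sum>a\<in>F\<union>G. scaleC (e a) (u a))"
      using F G by (intro normeq) auto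
    also have "\<dots> = 0" using cu eq by simp
    finally show ?thesis using cw by simp
  qed
  define f where "f v = (SOME w'. \<exists>F c. finite F \<and> F \<subseteq> I \<and> v = (\<Sum>a\<in>F. scaleC (c a) (u a))
                                      \<and> w' = (\<Sum>a\<in>F. scaleC (c a) (w a)))" for v
  have frep: "f (\<Sum>a\<in>F. scaleC (c a) (u a)) = (\<Sum>a\<in>F. scaleC (c a) (w a))"
    if F: "finite F" "F \<subseteq> I" for F c
  proof -
    let ?P = "\<lambda>w'. \<exists>G d. finite G \<and> G \<subseteq> I \<and> (\<Sum>a\<in>F. scaleC (c a) (u a)) = (\<Sum>a\<in>G. scaleC (d a) (u a))
                                      \<and> w' = (\<Sum>a\<in>G. scaleC (d a) (w a))"
    have "?P (\<Sum>a\<in>F. scaleC (c a) (w a))" using F by blast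
    then have "?P (f (\<Sum>a\<in>F. scaleC (c a) (u a)))" unfolding f_def by (rule someI)
    then obtain G d where G: "finite G" "G \<subseteq> I"
      "(\<Sum>a\<in>F. scaleC (c a) (u a)) = (\<Sum>a\<in>G. scaleC (d a) (u a))"
      "f (\<Sum>a\<in>F. scaleC (c a) (u a)) = (\<Sum>a\<in>G. scaleC (d a) (w a))" by blast
    then show ?thesis using wd[OF F G(1,2) G(3)] by simp
  qed
  have fu: "f (u a) = w a" if "a \<in> I" for a
    using frep[of "{a}" "\<lambda>_. 1"] that by (simp add: scaleC_one)
  have fadd: "f (v1 + v2) = f v1 + f v2" if vv: "v1 \<in> ?V" "v2 \<in> ?V" for v1 v2
  proof -
    obtain F c where F: "finite F" "F \<subseteq> I" "v1 = (\<Sum>a\<in>F. scaleC (c a) (u a))"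
      using index_rep[OF vv(1)] by blast
    obtain G d where G: "finite G" "G \<subseteq> I" "v2 = (\<Sum>a\<in>G. scaleC (d a) (u a))"
      using index_rep[OF vv(2)] by blast
    have "f (v1 + v2) = f (\<Sum>a\<in>F\<union>G. scaleC ((if a\<in>F then c a else 0) + (if a\<in>G then d a else 0)) (u a))"
      using sum_combine[OF F(1) G(1), of c u d] F G by simp
    also have "\<dots> = (\<Sum>a\<in>F\<union>G. scaleC ((if a\<in>F then c a else 0) + (if a\<in>G then d a else 0)) (w a))"
      using F G by (intro frep) auto
    also have "\<dots> = f v1 + f v2"
      using sum_combine[OF F(1) G(1), of c w d] F G frep by simp
    finally show ?thesis .
  qed
  have fscale: "f (scaleC k v) = scaleC k (f v)" if vv: "v \<in> ?V" for k v
  proof -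
    obtain F c where F: "finite F" "F \<subseteq> I" "v = (\<Sum>a\<in>F. scaleC (c a) (u a))"
      using index_rep[OF vv] by blast
    have "f (scaleC k v) = f (\<Sum>a\<in>F. scaleC (k * c a) (u a))" using F by (simp add: sum_scale)
    also have "\<dots> = (\<Sum>a\<in>F. scaleC (k * c a) (w a))" using F by (intro frep) auto
    also have "\<dots> = scaleC k (f v)" using F frep by (simp add: sum_scale)
    finally show ?thesis .
  qed
  have fnorm: "norm (f v) = norm v" if vv: "v \<in> ?V" for v
  proof -
    obtain F c where F: "finite F" "F \<subseteq> I" "v = (\<Sum>a\<in>F. scaleC (c a) (u a))"
      using index_rep[OF vv] by blast
    show ?thesis using F frep normeq by simp
  qed
  have Vdiff: "v1 + scaleC (-1) v2 \<in> ?V" if "v1 \<in> ?V" "v2 \<in> ?V" for v1 v2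
    using that by (intro cspan_add cspan_scale)
  have fdist: "dist (f v1) (f v2) = dist v1 v2" if "v1 \<in> ?V" "v2 \<in> ?V" for v1 v2
  proof -
    have m1: "scaleC (-1) x = - x" for x :: 'a
      by (simp add: scaleC_minus_left scaleC_one)
    have "f (v1 + scaleC (-1) v2) = f v1 + f (scaleC (-1) v2)"
      by (rule fadd[OF that(1) cspan_scale[OF that(2)]])
    also have "\<dots> = f v1 - f v2" unfolding fscale[OF that(2)] by (simp only: m1 diff_conv_add_uminus)
    finally have "f (v1 + scaleC (-1) v2) = f v1 - f v2" .
    moreover have "norm (f (v1 + scaleC (-1) v2)) = norm (v1 + scaleC (-1) v2)"
      by (rule fnorm[OF Vdiff[OF that]])
    ultimately show ?thesis by (simp add: dist_norm m1)
  qed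
  have uc: "uniformly_continuous_on ?V f"
    unfolding uniformly_continuous_on_def
    by (metis fdist)
  obtain g where g1: "uniformly_continuous_on (closure ?V) g" and g2: "\<And>x. x \<in> ?V \<Longrightarrow> f x = g x"
    using uniformly_continuous_on_extension_on_closure[OF uc] by metis
  have "continuous_on UNIV g" using g1 dense uniformly_continuous_imp_continuous by metis
  then have contg: "isCont g x" for x using continuous_on_eq_continuous_at[OF open_UNIV] by blast
  have seq: "\<exists>xs. (\<forall>n. xs n \<in> ?V) \<and> xs \<longlonglongrightarrow> x" for x
    using dense closure_sequential[of x ?V] by auto
  have gadd: "g (x + y) = g x + g y" for x y
  proof -
    obtain xs where xs: "\<forall>n. xs n \<in> ?V" "xs \<longlonglongrightarrow> x" using seq by blast
    obtain ys where ys: "\<forall>n. ys n \<in> ?V" "ys \<longlonglongrightarrow> y" using seq by blast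
    have "(\<lambda>n. g (xs n + ys n)) \<longlonglongrightarrow> g (x + y)"
      by (intro isCont_tendsto_compose[OF contg] tendsto_add xs ys)
    moreover have "(\<lambda>n. g (xs n + ys n)) = (\<lambda>n. g (xs n) + g (ys n))"
    proof
      fix n
      have "xs n + ys n \<in> ?V" using xs ys by (simp add: cspan_add)
      then show "g (xs n + ys n) = g (xs n) + g (ys n)"
        using xs ys g2 fadd by metis
    qed
    moreover have "(\<lambda>n. g (xs n) + g (ys n)) \<longlonglongrightarrow> g x + g y"
      by (intro tendsto_add isCont_tendsto_compose[OF contg] xs ys)
    ultimately show ?thesis using LIMSEQ_unique by metis
  qed
  have gscale: "g (scaleC k x) = scaleC k (g x)" for k x
  proof -
    obtain xs where xs: "\<forall>n. xs n \<in> ?V" "xs \<longlonglongrightarrow> x" using seq by blast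
    have "(\<lambda>n. g (scaleC k (xs n))) \<longlonglongrightarrow> g (scaleC k x)"
      by (intro isCont_tendsto_compose[OF contg] tendsto_scaleC xs)
    moreover have "(\<lambda>n. g (scaleC k (xs n))) = (\<lambda>n. scaleC k (g (xs n)))"
    proof
      fix n
      have "scaleC k (xs n) \<in> ?V" using xs by (simp add: cspan_scale)
      then show "g (scaleC k (xs n)) = scaleC k (g (xs n))"
        using xs g2 fscale by metis
    qed
    moreover have "(\<lambda>n. scaleC k (g (xs n))) \<longlonglongrightarrow> scaleC k (g x)"
      by (intro tendsto_scaleC isCont_tendsto_compose[OF contg] xs)
    ultimately show ?thesis using LIMSEQ_unique by metis
  qed
  have gnorm: "norm (g x) = norm x" for x
  proof -
    obtain xs where xs: "\<forall>n. xs n \<in> ?V" "xs \<longlonglongrightarrow> x" using seq by blast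
    have "(\<lambda>n. norm (g (xs n))) \<longlonglongrightarrow> norm (g x)"
      by (intro tendsto_norm isCont_tendsto_compose[OF contg] xs)
    moreover have "(\<lambda>n. norm (g (xs n))) = (\<lambda>n. norm (xs n))"
      using xs g2 fnorm by metis
    moreover have "(\<lambda>n. norm (xs n)) \<longlonglongrightarrow> norm x" by (intro tendsto_norm xs)
    ultimately show ?thesis using LIMSEQ_unique by metis
  qed
  have "bounded_clinear g"
    unfolding bounded_clinear_def using gadd gscale gnorm by (metis order_refl mult.right_neutral)
  moreover have "\<forall>a\<in>I. g (u a) = w a"
    using g2 fu cspan_superset by (metis image_eqI)
  ultimately show ?thesis by blast
qed


definition cprod :: "(nat \<Rightarrow> nat \<Rightarrow> complex) \<Rightarrow> nat \<Rightarrow> nat list \<Rightarrow> complex" where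
  "cprod q j w = prod_list (map (q j) w)"

lemma cprod_Nil[simp]: "cprod q j [] = 1" by (simp add: cprod_def)
lemma cprod_Cons[simp]: "cprod q j (h # w) = q j h * cprod q j w" by (simp add: cprod_def)

fun pm :: "(nat \<Rightarrow> nat \<Rightarrow> complex) \<Rightarrow> nat list \<Rightarrow> nat list \<Rightarrow> (complex \<times> nat list) option" where
  "pm q [] b = Some (1, b)"
| "pm q (g # w) b = (if g \<in> set b then
      (case pm q w (remove1 g b) of None \<Rightarrow> None
         | Some (c, r) \<Rightarrow> Some (cprod q g (takeWhile (\<lambda>h. h \<noteq> g) b) * c, r))
    else None)"

definition mq :: "(nat \<Rightarrow> nat \<Rightarrow> complex) \<Rightarrow> nat list \<Rightarrow> nat list \<Rightarrow> complex" where
  "mq q w b = (case pm q w b of Some (c, r) \<Rightarrow> (if r = [] then c else 0) | None \<Rightarrow> 0)"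

lemma mq_Nil: "mq q [] b = (if b = [] then 1 else 0)"
  by (simp add: mq_def)

lemma mq_Cons: "mq q (g # w) b =
   (if g \<in> set b then cprod q g (takeWhile (\<lambda>h. h \<noteq> g) b) * mq q w (remove1 g b) else 0)"
  by (simp add: mq_def split: option.split)

lemma mq_same_head: "mq q (g # w) (g # b) = mq q w b"
  by (simp add: mq_Cons)

lemma mq_refl: "mq q w w = 1"
  by (induct w) (simp_all add: mq_Nil mq_same_head)

lemma pm_append_right: "pm q w b = Some (c, r) \<Longrightarrow> pm q w (b @ e) = Some (c, r @ e)"
proof (induction w arbitrary: b c r)
  case Nil then show ?case by simp
next
  case (Cons g w)
  from Cons.prems have gb: "g \<in> set b" by (auto split: if_splits)
  from Cons.prems gb obtain c' where c': "pm q w (remove1 g b) = Some (c', r)"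
    and c: "c = cprod q g (takeWhile (\<lambda>h. h \<noteq> g) b) * c'"
    by (auto split: option.splits)
  have "pm q w (remove1 g b @ e) = Some (c', r @ e)" by (rule Cons.IH[OF c'])
  then show ?case using gb c by (simp add: remove1_append)
qed

lemma pm_append_left: "pm q (w1 @ w2) b = (case pm q w1 b of None \<Rightarrow> None
    | Some (c, r) \<Rightarrow> (case pm q w2 r of None \<Rightarrow> None | Some (c', r') \<Rightarrow> Some (c * c', r')))"
proof (induction w1 arbitrary: b)
  case Nil then show ?case by (simp split: option.split)
next
  case (Cons g w)
  show ?case
    by (auto simp add: Cons.IH split: option.split)
qed

lemma mq_split:
  assumes "pm q w b = Some (c, [])"
  shows "mq q (w @ w') (b @ b') = c * mq q w' b'"
proof -
  have "pm q w (b @ b') = Some (c, b')" using pm_append_right[OF assms] by simp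
  then show ?thesis
    by (simp add: mq_def pm_append_left split: option.split)
qed

lemma mq_good: "mq q w b \<noteq> 0 \<Longrightarrow> \<exists>c. pm q w b = Some (c, [])"
  by (auto simp: mq_def split: option.splits if_splits)

lemma mq_good_val: "pm q w b = Some (c, []) \<Longrightarrow> mq q w b = c"
  by (simp add: mq_def)

context
  fixes d :: nat and q :: "nat \<Rightarrow> nat \<Rightarrow> complex" and lam :: real
  assumes qb: "\<And>i j. i \<in> {1..d} \<Longrightarrow> j \<in> {1..d} \<Longrightarrow> i \<noteq> j \<Longrightarrow> cmod (q i j) \<le> lam"
    and l0: "0 \<le> lam" and l1: "lam < 1"
begin

lemma cprod_bound:
  assumes "g \<in> {1..d}" "set w \<subseteq> {1..d}" "g \<notin> set w"
  shows "cmod (cprod q g w) \<le> lam ^ length w"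
  using assms
proof (induction w)
  case Nil then show ?case by simp
next
  case (Cons h w)
  have "cmod (cprod q g (h # w)) = cmod (q g h) * cmod (cprod q g w)" by (simp add: norm_mult)
  also have "\<dots> \<le> lam * lam ^ length w"
    using Cons qb[of g h] l0 by (intro mult_mono) auto
  finally show ?case by simp
qed

lemma cprod_bound1:
  assumes "g \<in> {1..d}" "set w \<subseteq> {1..d}" "g \<notin> set w"
  shows "cmod (cprod q g w) \<le> 1"
proof -
  have "lam ^ length w \<le> 1" using l0 l1 by (simp add: power_le_one)
  then show ?thesis using cprod_bound[OF assms] by linarith
qed

lemma takeWhile_sub: "set (takeWhile P b) \<subseteq> set b"
  by (induct b) auto

lemma takeWhile_notin: "g \<notin> set (takeWhile (\<lambda>h. h \<noteq> g) b)"
  by (induct b) auto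

lemma mq_bound:
  assumes "set w \<subseteq> {1..d}" "set b \<subseteq> {1..d}"
  shows "cmod (mq q w b) \<le> 1"
  using assms
proof (induction w arbitrary: b)
  case Nil then show ?case by (simp add: mq_Nil)
next
  case (Cons g w)
  show ?case
  proof (cases "g \<in> set b")
    case True
    have tw: "set (takeWhile (\<lambda>h. h \<noteq> g) b) \<subseteq> {1..d}"
      using Cons.prems(2) takeWhile_sub by (rule order_trans[rotated])
    have rb: "set (remove1 g b) \<subseteq> {1..d}" using Cons.prems(2) set_remove1_subset[of g b] by (rule order_trans[rotated])
    have m1: "cmod (mq q w (remove1 g b)) \<le> 1" using Cons.IH[OF _ rb] Cons.prems(1) by simp
    have c1: "cmod (cprod q g (takeWhile (\<lambda>h. h \<noteq> g) b)) \<le> 1"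
      using Cons.prems(1) by (intro cprod_bound1[OF _ tw takeWhile_notin]) auto
    have "cmod (mq q (g # w) b) = cmod (cprod q g (takeWhile (\<lambda>h. h \<noteq> g) b)) * cmod (mq q w (remove1 g b))"
      using True by (simp add: mq_Cons norm_mult)
    also have "\<dots> \<le> 1 * 1" using c1 m1 by (intro mult_mono) auto
    finally show ?thesis by simp
  next
    case False then show ?thesis by (simp add: mq_Cons)
  qed
qed

lemma mq_bound_neq:
  assumes "set w \<subseteq> {1..d}" "set b \<subseteq> {1..d}" "length w = length b" "w \<noteq> b"
  shows "cmod (mq q w b) \<le> lam"
  using assms
proof (induction w arbitrary: b)
  case Nil then show ?case by simp
next
  case (Cons g w)
  then obtain h b' where b: "b = h # b'" by (cases b) auto
  show ?case
  proof (cases "g = h")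
    case True
    then have "w \<noteq> b'" "length w = length b'" using Cons.prems b by auto
    then show ?thesis using Cons.IH[of b'] Cons.prems b True by (simp add: mq_same_head)
  next
    case False
    show ?thesis
    proof (cases "g \<in> set b")
      case gb: True
      have tw: "takeWhile (\<lambda>x. x \<noteq> g) b = h # takeWhile (\<lambda>x. x \<noteq> g) b'" using b False by simp
      have tw2: "set (takeWhile (\<lambda>x. x \<noteq> g) b') \<subseteq> {1..d}"
        using Cons.prems(2) b takeWhile_sub[of _ b'] by auto
      have rb: "set (remove1 g b) \<subseteq> {1..d}" using Cons.prems(2) set_remove1_subset[of g b] by (rule order_trans[rotated])
      have m1: "cmod (mq q w (remove1 g b)) \<le> 1" using mq_bound[OF _ rb] Cons.prems(1) by simp
      have hq: "cmod (q g h) \<le> lam" using Cons.prems b False by (intro qb) auto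
      have c1: "cmod (cprod q g (takeWhile (\<lambda>x. x \<noteq> g) b')) \<le> 1"
        using Cons.prems(1) by (intro cprod_bound1[OF _ tw2 takeWhile_notin]) auto
      have "cmod (mq q (g # w) b) = cmod (q g h) * cmod (cprod q g (takeWhile (\<lambda>x. x \<noteq> g) b'))
            * cmod (mq q w (remove1 g b))"
        using gb tw by (simp add: mq_Cons norm_mult)
      also have "\<dots> \<le> lam * 1 * 1"
        using hq c1 m1 l0 by (intro mult_mono) auto
      finally show ?thesis by simp
    next
      case False then show ?thesis using l0 by (simp add: mq_Cons)
    qed
  qed
qed

lemma map_upt_split: "k \<le> k' \<Longrightarrow> map f [0..<k'] = map f [0..<k] @ map f [k..<k']"
  by (metis le_add_diff_inverse upt_add_eq_append zero_le map_append)

lemma mq_converges: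
  assumes ga: "\<And>k. \<gamma> k \<in> {1..d}" and be: "\<And>k. \<beta> k \<in> {1..d}"
  shows "convergent (\<lambda>k. mq q (map \<gamma> [0..<k]) (map \<beta> [0..<k]))"
proof -
  define X where "X k = mq q (map \<gamma> [0..<k]) (map \<beta> [0..<k])" for k
  define good where "good k \<longleftrightarrow> (\<exists>c. pm q (map \<gamma> [0..<k]) (map \<beta> [0..<k]) = Some (c, []))" for k
  have Xgood: "X k = 0" if ng: "\<not> good k" for k
  proof (rule ccontr)
    assume "X k \<noteq> 0"
    then have "\<exists>c. pm q (map \<gamma> [0..<k]) (map \<beta> [0..<k]) = Some (c, [])" unfolding X_def by (rule mq_good)
    then have "good k" unfolding good_def .
    with ng show False by simp
  qed
  have setg: "set (map \<gamma> xs) \<subseteq> {1..d}" for xs using ga by auto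
  have setb: "set (map \<beta> xs) \<subseteq> {1..d}" for xs using be by auto
  have Xb: "cmod (X k) \<le> 1" for k unfolding X_def by (rule mq_bound[OF setg setb])
  have Xsplit: "X k' = X k * mq q (map \<gamma> [k..<k']) (map \<beta> [k..<k'])"
    if gk: "good k" and kk: "k \<le> k'" for k k'
  proof -
    obtain c where c: "pm q (map \<gamma> [0..<k]) (map \<beta> [0..<k]) = Some (c, [])"
      using gk unfolding good_def by blast
    have "X k' = c * mq q (map \<gamma> [k..<k']) (map \<beta> [k..<k'])"
      unfolding X_def map_upt_split[OF kk, of \<gamma>] map_upt_split[OF kk, of \<beta>] by (rule mq_split[OF c])
    moreover have "X k = c" unfolding X_def by (rule mq_good_val[OF c])
    ultimately show ?thesis by simp
  qed
  show ?thesis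
  proof (cases "\<exists>k. good k \<and> (\<forall>j\<ge>k. \<gamma> j = \<beta> j)")
    case True
    then obtain k where k: "good k" "\<forall>j\<ge>k. \<gamma> j = \<beta> j" by blast
    have Xc: "X k' = X k" if "k \<le> k'" for k'
    proof -
      have eq: "map \<gamma> [k..<k'] = map \<beta> [k..<k']" using k(2) by (intro map_cong) auto
      have "X k' = X k * mq q (map \<gamma> [k..<k']) (map \<beta> [k..<k'])" by (rule Xsplit[OF k(1) that])
      then show ?thesis by (simp only: eq mq_refl mult_1_right)
    qed
    have "X \<longlonglongrightarrow> X k" by (rule tendsto_eventually, rule eventually_sequentiallyI[of k], rule Xc)
    then show ?thesis unfolding X_def convergent_def by blast
  next
    case False
    have nb: "\<exists>j\<ge>k. \<gamma> j \<noteq> \<beta> j" if gk: "good k" for k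
    proof (rule ccontr)
      assume "\<not> (\<exists>j\<ge>k. \<gamma> j \<noteq> \<beta> j)"
      then have "\<forall>j\<ge>k. \<gamma> j = \<beta> j" by auto
      then show False using False gk by auto
    qed
    have claim: "\<exists>N. \<forall>k\<ge>N. cmod (X k) \<le> lam ^ n" for n
    proof (induction n)
      case 0 show ?case by (intro exI[of _ 0] allI impI) (simp add: Xb)
    next
      case (Suc n)
      then obtain N where N: "\<And>k. k \<ge> N \<Longrightarrow> cmod (X k) \<le> lam ^ n" by blast
      show ?case
      proof (cases "\<exists>k\<ge>N. good k")
        case True
        then obtain k where k: "k \<ge> N" "good k" by blast
        then obtain j where j: "j \<ge> k" "\<gamma> j \<noteq> \<beta> j" using nb by blast
        have "cmod (X k') \<le> lam ^ Suc n" if k': "k' \<ge> Suc j" for k'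
        proof -
          have neq: "map \<gamma> [k..<k'] \<noteq> map \<beta> [k..<k']"
          proof
            assume "map \<gamma> [k..<k'] = map \<beta> [k..<k']"
            then have "map \<gamma> [k..<k'] ! (j - k) = map \<beta> [k..<k'] ! (j - k)" by (rule arg_cong)
            then show False using j k' by simp
          qed
          have kk': "k \<le> k'" using j k' by simp
          have "X k' = X k * mq q (map \<gamma> [k..<k']) (map \<beta> [k..<k'])" by (rule Xsplit[OF k(2) kk'])
          then have "cmod (X k') = cmod (X k) * cmod (mq q (map \<gamma> [k..<k']) (map \<beta> [k..<k']))"
            by (simp only: norm_mult)
          also have "\<dots> \<le> lam ^ n * lam"
            using N[OF k(1)] mq_bound_neq[OF setg setb _ neq] l0 by (intro mult_mono) auto
          finally show ?thesis by (simp add: mult.commute)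
        qed
        then show ?thesis by blast
      next
        case False
        then have "cmod (X k) \<le> lam ^ Suc n" if "k \<ge> N" for k using that Xgood l0 by auto
        then show ?thesis by blast
      qed
    qed
    have "X \<longlonglongrightarrow> 0"
      unfolding LIMSEQ_iff
    proof (intro allI impI)
      fix r :: real assume r: "0 < r"
      obtain n where n: "lam ^ n < r" using real_arch_pow_inv[OF r l1] by blast
      obtain N where "\<forall>k\<ge>N. cmod (X k) \<le> lam ^ n" using claim by blast
      then have "norm (X k - 0) < r" if "k \<ge> N" for k using n that by fastforce
      then show "\<exists>no. \<forall>k\<ge>no. norm (X k - 0) < r" by blast
    qed
    then show ?thesis unfolding X_def convergent_def by blast
  qed
qed

end

lemma lim_Suc: "lim (\<lambda>n. X (Suc n)) = lim X"
proof -
  have "(\<lambda>n. X (Suc n)) \<longlonglongrightarrow> L \<longleftrightarrow> X \<longlonglongrightarrow> L" for L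
    using LIMSEQ_Suc LIMSEQ_imp_Suc by blast
  then show ?thesis unfolding lim_def by simp
qed

lemma lim_scaled:
  fixes Y :: "nat \<Rightarrow> complex"
  assumes conv: "convergent Y" and ev: "\<And>m. m \<ge> r \<Longrightarrow> X (Suc m) = c * Y m"
  shows "lim X = c * lim Y"
proof -
  have "Y \<longlonglongrightarrow> lim Y" using conv by (simp add: convergent_LIMSEQ_iff)
  then have "(\<lambda>m. c * Y m) \<longlonglongrightarrow> c * lim Y" by (intro tendsto_mult tendsto_const)
  moreover have "eventually (\<lambda>m. c * Y m = X (Suc m)) sequentially"
    by (rule eventually_sequentiallyI[of r]) (simp add: ev)
  ultimately have "(\<lambda>m. X (Suc m)) \<longlonglongrightarrow> c * lim Y" by (rule Lim_transform_eventually)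
  then have "X \<longlonglongrightarrow> c * lim Y" by (rule LIMSEQ_imp_Suc)
  then show ?thesis by (rule limI)
qed

lemma lim_zero_ev:
  fixes X :: "nat \<Rightarrow> complex"
  assumes ev: "\<And>m. X (Suc m) = 0"
  shows "lim X = 0"
proof -
  have "(\<lambda>m. X (Suc m)) \<longlonglongrightarrow> 0" using ev by simp
  then have "X \<longlonglongrightarrow> 0" by (rule LIMSEQ_imp_Suc)
  then show ?thesis by (rule limI)
qed


lemma word_op_Nil[simp]: "word_op S [] x = x" by (simp add: word_op_def)
lemma word_op_Cons[simp]: "word_op S (a # w) x = S a (word_op S w x)" by (simp add: word_op_def)
lemma word_adj_Nil[simp]: "word_adj S [] x = x" by (simp add: word_adj_def)
lemma word_adj_Cons[simp]: "word_adj S (a # w) x = word_adj S w (cadjoint (S a) x)"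
  by (simp add: word_adj_def)

lemma bclinear_comp:
  assumes A: "bounded_clinear A" and B: "bounded_clinear B"
  shows "bounded_clinear (A \<circ> B)"
proof -
  obtain KA where KA0: "KA \<ge> 0" and KA: "\<And>x. norm (A x) \<le> norm x * KA" using bclinear_bound[OF A] by blast
  obtain KB where KB0: "KB \<ge> 0" and KB: "\<And>x. norm (B x) \<le> norm x * KB" using bclinear_bound[OF B] by blast
  have "norm (A (B x)) \<le> norm x * (KB * KA)" for x
  proof -
    have "norm (A (B x)) \<le> norm (B x) * KA" by (rule KA)
    also have "\<dots> \<le> (norm x * KB) * KA" by (rule mult_right_mono[OF KB KA0])
    finally show ?thesis by (simp add: mult.assoc)
  qed
  then show ?thesis unfolding bounded_clinear_def
    by (auto simp: bclinear_add[OF A] bclinear_add[OF B] bclinear_scaleC[OF A] bclinear_scaleC[OF B])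
qed

lemma bclinear_id: "bounded_clinear (id :: 'a::complex_inner \<Rightarrow> 'a)"
  unfolding bounded_clinear_def by (auto intro: exI[of _ 1])

lemma bclinear_scale:
  assumes T: "bounded_clinear T"
  shows "bounded_clinear (\<lambda>x. scaleC c (T x))"
proof -
  obtain K where K0: "K \<ge> 0" and K: "\<And>x. norm (T x) \<le> norm x * K" using bclinear_bound[OF T] by blast
  have "norm (scaleC c (T x)) \<le> norm x * (cmod c * K)" for x
  proof -
    have "norm (scaleC c (T x)) = cmod c * norm (T x)" by (rule norm_scaleC)
    also have "\<dots> \<le> cmod c * (norm x * K)" by (rule mult_left_mono[OF K norm_ge_zero])
    finally show ?thesis by (simp add: ac_simps)
  qed
  moreover have "scaleC c (T (scaleC a x)) = scaleC a (scaleC c (T x))" for a x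
    by (simp add: bclinear_scaleC[OF T] scaleC_scaleC mult.commute)
  ultimately show ?thesis unfolding bounded_clinear_def
    by (auto simp: bclinear_add[OF T] scaleC_add_right)
qed

context
  fixes d :: nat and q :: "nat \<Rightarrow> nat \<Rightarrow> complex" and S :: "nat \<Rightarrow> 'f::chilbert \<Rightarrow> 'f"
  assumes W: "W_rep d q S"
begin

lemma S_bcl: "j \<in> {1..d} \<Longrightarrow> bounded_clinear (S j)"
  using W unfolding W_rep_def by blast

lemma A_bcl: "j \<in> {1..d} \<Longrightarrow> bounded_clinear (cadjoint (S j))"
  by (rule cadjoint_bclinear[OF S_bcl])

lemma AS_id: "j \<in> {1..d} \<Longrightarrow> cadjoint (S j) (S j x) = x"
proof -
  assume j: "j \<in> {1..d}"
  then have "cadjoint (S j) \<circ> S j = id" using W unfolding W_rep_def by blast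
  from fun_cong[OF this, of x] show ?thesis by simp
qed

lemma AS_comm: "i \<in> {1..d} \<Longrightarrow> j \<in> {1..d} \<Longrightarrow> i \<noteq> j \<Longrightarrow>
    cadjoint (S i) (S j x) = scaleC (q i j) (S j (cadjoint (S i) x))"
proof -
  assume ij: "i \<in> {1..d}" "j \<in> {1..d}" "i \<noteq> j"
  then have "cadjoint (S i) \<circ> S j = (\<lambda>x. scaleC (q i j) (S j (cadjoint (S i) x)))"
    using W unfolding W_rep_def by blast
  from fun_cong[OF this, of x] show ?thesis by simp
qed

lemma word_op_scale: "set w \<subseteq> {1..d} \<Longrightarrow> word_op S w (scaleC c x) = scaleC c (word_op S w x)"
  by (induct w) (auto simp: bclinear_scaleC[OF S_bcl])

lemma word_op_zero: "set w \<subseteq> {1..d} \<Longrightarrow> word_op S w 0 = 0"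
  using word_op_scale[of w 0 0] by simp

lemma word_adj_scale: "set w \<subseteq> {1..d} \<Longrightarrow> word_adj S w (scaleC c x) = scaleC c (word_adj S w x)"
  by (induct w arbitrary: x) (auto simp: bclinear_scaleC[OF A_bcl])

lemma word_adj_zero: "set w \<subseteq> {1..d} \<Longrightarrow> word_adj S w 0 = 0"
  using word_adj_scale[of w 0 0] by simp

lemma adj_word:
  assumes j: "j \<in> {1..d}" and b: "set b \<subseteq> {1..d}"
  shows "cadjoint (S j) (word_op S b x) = (if j \<in> set b
      then scaleC (cprod q j (takeWhile (\<lambda>h. h \<noteq> j) b)) (word_op S (remove1 j b) x)
      else scaleC (cprod q j b) (word_op S b (cadjoint (S j) x)))"
  using b
proof (induction b)
  case Nil then show ?case by (simp add: scaleC_one)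
next
  case (Cons h b)
  have h: "h \<in> {1..d}" and bs: "set b \<subseteq> {1..d}" using Cons.prems by auto
  show ?case
  proof (cases "h = j")
    case True then show ?thesis using j by (simp add: AS_id scaleC_one)
  next
    case hj: False
    have step: "cadjoint (S j) (word_op S (h # b) x) = scaleC (q j h) (S h (cadjoint (S j) (word_op S b x)))"
      using AS_comm[OF j h] hj by simp
    have lin: "S h (scaleC c y) = scaleC c (S h y)" for c y by (rule bclinear_scaleC[OF S_bcl[OF h]])
    show ?thesis
    proof (cases "j \<in> set b")
      case True
      then show ?thesis using step Cons.IH[OF bs] hj by (simp add: lin scaleC_scaleC)
    next
      case False
      then show ?thesis using step Cons.IH[OF bs] hj by (simp add: lin scaleC_scaleC)
    qed
  qed
qed

lemma word_adj_op:
  assumes Om: "\<forall>j\<in>{1..d}. cadjoint (S j) \<Omega> = 0"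
  shows "set g \<subseteq> {1..d} \<Longrightarrow> set b \<subseteq> {1..d} \<Longrightarrow> length g = length b \<Longrightarrow>
    word_adj S g (word_op S b \<Omega>) = scaleC (mq q g b) \<Omega>"
proof (induction g arbitrary: b)
  case Nil then show ?case by (simp add: mq_Nil scaleC_one)
next
  case (Cons a g)
  have a: "a \<in> {1..d}" and gs: "set g \<subseteq> {1..d}" using Cons.prems by auto
  show ?case
  proof (cases "a \<in> set b")
    case True
    have rb: "set (remove1 a b) \<subseteq> {1..d}"
      using Cons.prems(2) set_remove1_subset[of a b] by (rule order_trans[rotated])
    have len: "length g = length (remove1 a b)" using Cons.prems(3) True by (simp add: length_remove1)
    have "word_adj S (a # g) (word_op S b \<Omega>)
        = word_adj S g (scaleC (cprod q a (takeWhile (\<lambda>h. h \<noteq> a) b)) (word_op S (remove1 a b) \<Omega>))"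
      using adj_word[OF a Cons.prems(2)] True by simp
    also have "\<dots> = scaleC (cprod q a (takeWhile (\<lambda>h. h \<noteq> a) b)) (scaleC (mq q g (remove1 a b)) \<Omega>)"
      by (simp add: word_adj_scale[OF gs] Cons.IH[OF gs rb len])
    also have "\<dots> = scaleC (mq q (a # g) b) \<Omega>" using True by (simp add: mq_Cons scaleC_scaleC)
    finally show ?thesis .
  next
    case False
    have "word_adj S (a # g) (word_op S b \<Omega>)
        = word_adj S g (scaleC (cprod q a b) (word_op S b (cadjoint (S a) \<Omega>)))"
      using adj_word[OF a Cons.prems(2)] False by simp
    also have "\<dots> = 0" using Om a by (simp add: word_op_zero[OF Cons.prems(2)] word_adj_zero[OF gs])
    also have "\<dots> = scaleC (mq q (a # g) b) \<Omega>" using False by (simp add: mq_Cons)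
    finally show ?thesis .
  qed
qed

lemma qfin_mq:
  assumes Om: "\<forall>j\<in>{1..d}. cadjoint (S j) \<Omega> = 0" and n1: "norm \<Omega> = 1"
    and "set g \<subseteq> {1..d}" "set b \<subseteq> {1..d}" "length g = length b"
  shows "qfin S \<Omega> g b = mq q g b"
proof -
  have "qfin S \<Omega> g b = cinner (scaleC (mq q g b) \<Omega>) \<Omega>"
    unfolding qfin_def using word_adj_op[OF Om assms(3-5)] by simp
  also have "\<dots> = mq q g b" using n1 by (simp add: cinner_scaleC_left cinner_norm)
  finally show ?thesis .
qed

end

lemma Lam_val: "\<beta> \<in> Lam d \<Longrightarrow> \<beta> k \<in> {1..d}"
  by (simp add: Lam_def)

lemma set_map_Lam: "\<beta> \<in> Lam d \<Longrightarrow> set (map \<beta> xs) \<subseteq> {1..d}"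
  using Lam_val by fastforce

lemma qinf_mq:
  assumes fock: "fock_rep d q S \<Omega>" and g: "\<gamma> \<in> Lam d" and b: "\<beta> \<in> Lam d"
  shows "qinf S \<Omega> \<gamma> \<beta> = lim (\<lambda>m. mq q (map \<gamma> [0..<m]) (map \<beta> [0..<m]))"
proof -
  have W: "W_rep d q S" and n1: "norm \<Omega> = 1" and Om: "\<forall>j\<in>{1..d}. cadjoint (S j) \<Omega> = 0"
    using fock unfolding fock_rep_def by auto
  have "(\<lambda>m. qfin S \<Omega> (map \<gamma> [0..<m]) (map \<beta> [0..<m])) = (\<lambda>m. mq q (map \<gamma> [0..<m]) (map \<beta> [0..<m]))"
    by (rule ext, rule qfin_mq[OF W Om n1 set_map_Lam[OF g] set_map_Lam[OF b]]) simp
  then show ?thesis unfolding qinf_def by simp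
qed

lemma map_sigma_j: "map (sigma_j j \<beta>) [0..<Suc m] = j # map \<beta> [0..<m]"
  by (induct m) (simp_all add: sigma_j_def)

lemma funpow_sigma: "(sigma ^^ n) \<beta> = (\<lambda>k. \<beta> (k + n))"
  by (induct n) (simp_all add: sigma_def)

lemma sigma_j_class:
  assumes j: "j \<in> {1..d}" and b: "\<beta> \<in> equiv_class d \<alpha>"
  shows "sigma_j j \<beta> \<in> equiv_class d \<alpha>"
proof -
  have L: "\<beta> \<in> Lam d" and "mequiv \<beta> \<alpha>" using b by (auto simp: equiv_class_def)
  then obtain m n where mn: "(sigma ^^ m) \<beta> = (sigma ^^ n) \<alpha>" unfolding mequiv_def by blast
  have "(sigma ^^ Suc m) (sigma_j j \<beta>) = (sigma ^^ m) \<beta>"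
    by (simp add: funpow_sigma sigma_j_def sigma_def)
  then have "mequiv (sigma_j j \<beta>) \<alpha>" unfolding mequiv_def using mn by metis
  moreover have "sigma_j j \<beta> \<in> Lam d"
    using L j by (auto simp: Lam_def sigma_j_def split: nat.split)
  ultimately show ?thesis by (simp add: equiv_class_def)
qed

lemma first_pos_val: "contains j \<beta> \<Longrightarrow> \<beta> (first_pos j \<beta>) = j"
  unfolding contains_def first_pos_def by (rule LeastI_ex)

lemma before_first_pos: "k < first_pos j \<beta> \<Longrightarrow> \<beta> k \<noteq> j"
  unfolding first_pos_def by (rule not_less_Least)

lemma remove_j_class:
  assumes b: "\<beta> \<in> equiv_class d \<alpha>" and c: "contains j \<beta>"
  shows "remove_j j \<beta> \<in> equiv_class d \<alpha>"
proof -
  have L: "\<beta> \<in> Lam d" and "mequiv \<beta> \<alpha>" using b by (auto simp: equiv_class_def)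
  then obtain m n where mn: "(sigma ^^ m) \<beta> = (sigma ^^ n) \<alpha>" unfolding mequiv_def by blast
  have mn': "\<beta> (k + m) = \<alpha> (k + n)" for k using fun_cong[OF mn, of k] by (simp add: funpow_sigma)
  define r where "r = first_pos j \<beta>"
  have "(sigma ^^ (r + m)) (remove_j j \<beta>) = (sigma ^^ (Suc r + n)) \<alpha>"
  proof
    fix k
    have "(sigma ^^ (r + m)) (remove_j j \<beta>) k = \<beta> (Suc (k + r) + m)"
      by (simp add: funpow_sigma remove_j_def r_def[symmetric] add.assoc)
    also have "\<dots> = \<alpha> (Suc (k + r) + n)" by (rule mn')
    also have "\<dots> = (sigma ^^ (Suc r + n)) \<alpha> k" by (simp add: funpow_sigma sigma_def add.assoc)
    finally show "(sigma ^^ (r + m)) (remove_j j \<beta>) k = (sigma ^^ (Suc r + n)) \<alpha> k" .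
  qed
  then have "mequiv (remove_j j \<beta>) \<alpha>" unfolding mequiv_def by blast
  moreover have "remove_j j \<beta> \<in> Lam d" using L by (auto simp: Lam_def remove_j_def)
  ultimately show ?thesis by (simp add: equiv_class_def)
qed

lemma map_upt_split': "k \<le> k' \<Longrightarrow> map f [0..<k'] = map f [0..<k] @ map f [k..<k']"
  by (metis le_add_diff_inverse upt_add_eq_append zero_le map_append)

lemma prod_list_upt: "prod_list (map f [0..<r]) = (\<Prod>k<r. f k)"
  by (induct r) simp_all

lemma decomp:
  assumes c: "contains j \<beta>" and rm: "first_pos j \<beta> \<le> m"
  shows "takeWhile (\<lambda>h. h \<noteq> j) (map \<beta> [0..<Suc m]) = map \<beta> [0..<first_pos j \<beta>]"
    and "remove1 j (map \<beta> [0..<Suc m]) = map (remove_j j \<beta>) [0..<m]"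
    and "j \<in> set (map \<beta> [0..<Suc m])"
proof -
  define r where "r = first_pos j \<beta>"
  have rm': "r \<le> m" using rm by (simp add: r_def)
  have bj: "\<beta> r = j" using first_pos_val[OF c] by (simp add: r_def)
  have bne: "\<forall>x\<in>set (map \<beta> [0..<r]). x \<noteq> j" using before_first_pos[of _ j \<beta>] by (auto simp: r_def)
  have tail: "map \<beta> [Suc r..<Suc m] = map (remove_j j \<beta>) [r..<m]"
  proof -
    have "map \<beta> [Suc r..<Suc m] = map \<beta> (map Suc [r..<m])" by (simp add: map_Suc_upt)
    also have "\<dots> = map (remove_j j \<beta>) [r..<m]" by (auto simp: remove_j_def r_def[symmetric])
    finally show ?thesis .
  qed
  have d1: "map \<beta> [0..<Suc m] = map \<beta> [0..<r] @ j # map (remove_j j \<beta>) [r..<m]"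
  proof -
    have "map \<beta> [0..<Suc m] = map \<beta> [0..<r] @ map \<beta> [r..<Suc m]"
      using rm' by (intro map_upt_split') simp
    also have "[r..<Suc m] = r # [Suc r..<Suc m]" using rm' by (intro upt_conv_Cons) simp
    finally show ?thesis using bj tail by simp
  qed
  have d2: "map (remove_j j \<beta>) [0..<m] = map \<beta> [0..<r] @ map (remove_j j \<beta>) [r..<m]"
  proof -
    have "map (remove_j j \<beta>) [0..<m] = map (remove_j j \<beta>) [0..<r] @ map (remove_j j \<beta>) [r..<m]"
      using rm' by (rule map_upt_split')
    also have "map (remove_j j \<beta>) [0..<r] = map \<beta> [0..<r]" by (auto simp: remove_j_def r_def[symmetric])
    finally show ?thesis .
  qed
  have tw: "takeWhile (\<lambda>h. h \<noteq> j) (map \<beta> [0..<r] @ j # map (remove_j j \<beta>) [r..<m])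
      = map \<beta> [0..<r] @ takeWhile (\<lambda>h. h \<noteq> j) (j # map (remove_j j \<beta>) [r..<m])"
    by (rule takeWhile_append2) (use bne in blast)
  show "takeWhile (\<lambda>h. h \<noteq> j) (map \<beta> [0..<Suc m]) = map \<beta> [0..<first_pos j \<beta>]"
    unfolding d1 tw by (simp add: r_def)
  have "j \<notin> set (map \<beta> [0..<r])" using bne by blast
  then show "remove1 j (map \<beta> [0..<Suc m]) = map (remove_j j \<beta>) [0..<m]"
    unfolding d1 d2 by (simp add: remove1_append)
  show "j \<in> set (map \<beta> [0..<Suc m])" unfolding d1 by simp
qed

lemma qj_cprod: "cprod q j (map \<beta> [0..<first_pos j \<beta>]) = qj q j \<beta>"
  by (simp add: cprod_def qj_def prod_list_upt comp_def)


lemma qinf_sigma_j_both: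
  assumes fock: "fock_rep d q S \<Omega>" and j: "j \<in> {1..d}" and g: "\<gamma> \<in> Lam d" and b: "\<beta> \<in> Lam d"
  shows "qinf S \<Omega> (sigma_j j \<gamma>) (sigma_j j \<beta>) = qinf S \<Omega> \<gamma> \<beta>"
proof -
  have gj: "sigma_j j \<gamma> \<in> Lam d" and bj: "sigma_j j \<beta> \<in> Lam d"
    using g b j by (auto simp: Lam_def sigma_j_def split: nat.split)
  have "qinf S \<Omega> (sigma_j j \<gamma>) (sigma_j j \<beta>)
      = lim (\<lambda>m. mq q (map (sigma_j j \<gamma>) [0..<m]) (map (sigma_j j \<beta>) [0..<m]))"
    by (rule qinf_mq[OF fock gj bj])
  also have "\<dots> = lim (\<lambda>m. mq q (map (sigma_j j \<gamma>) [0..<Suc m]) (map (sigma_j j \<beta>) [0..<Suc m]))"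
    by (rule lim_Suc[symmetric])
  also have "\<dots> = lim (\<lambda>m. mq q (map \<gamma> [0..<m]) (map \<beta> [0..<m]))"
    by (simp only: map_sigma_j mq_same_head)
  also have "\<dots> = qinf S \<Omega> \<gamma> \<beta>" by (rule qinf_mq[OF fock g b, symmetric])
  finally show ?thesis .
qed

lemma lam_exists:
  fixes d :: nat and q :: "nat \<Rightarrow> nat \<Rightarrow> complex"
  assumes "\<forall>i\<in>{1..d}. \<forall>j\<in>{1..d}. i \<noteq> j \<longrightarrow> norm (q i j) < 1"
  shows "\<exists>lam. 0 \<le> lam \<and> lam < 1 \<and> (\<forall>i j. i \<in> {1..d} \<longrightarrow> j \<in> {1..d} \<longrightarrow> i \<noteq> j \<longrightarrow> cmod (q i j) \<le> lam)"
proof -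
  define M where "M = (\<lambda>p. cmod (q (fst p) (snd p))) ` {p \<in> {1..d} \<times> {1..d}. fst p \<noteq> snd p}"
  have "finite {p \<in> {1..d} \<times> {1..d}. fst p \<noteq> snd p}" by (rule finite_subset[of _ "{1..d} \<times> {1..d}"]) auto
  then have fin: "finite (insert 0 M)" unfolding M_def by simp
  define lam where "lam = Max (insert 0 M)"
  have "lam \<in> insert 0 M" unfolding lam_def by (rule Max_in[OF fin]) simp
  then have "lam < 1" using assms by (auto simp: M_def)
  moreover have "0 \<le> lam" unfolding lam_def by (rule Max_ge[OF fin]) simp
  moreover have "cmod (q i j) \<le> lam" if "i \<in> {1..d}" "j \<in> {1..d}" "i \<noteq> j" for i j
  proof -
    have "cmod (q i j) \<in> insert 0 M" unfolding M_def using that by (auto intro!: image_eqI[of _ _ "(i,j)"])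
    then show ?thesis unfolding lam_def by (rule Max_ge[OF fin])
  qed
  ultimately show ?thesis by blast
qed

lemma qinf_sigma_j_left:
  assumes fock: "fock_rep d q S \<Omega>" and j: "j \<in> {1..d}" and g: "\<gamma> \<in> Lam d" and b: "\<beta> \<in> Lam d"
    and c: "contains j \<beta>"
    and qb: "\<And>i j. i \<in> {1..d} \<Longrightarrow> j \<in> {1..d} \<Longrightarrow> i \<noteq> j \<Longrightarrow> cmod (q i j) \<le> lam"
    and l0: "0 \<le> lam" and l1: "lam < 1"
  shows "qinf S \<Omega> (sigma_j j \<gamma>) \<beta> = qj q j \<beta> * qinf S \<Omega> \<gamma> (remove_j j \<beta>)"
proof -
  have gj: "sigma_j j \<gamma> \<in> Lam d" using g j by (auto simp: Lam_def sigma_j_def split: nat.split)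
  have rb: "remove_j j \<beta> \<in> Lam d" using b by (auto simp: Lam_def remove_j_def)
  have conv: "convergent (\<lambda>m. mq q (map \<gamma> [0..<m]) (map (remove_j j \<beta>) [0..<m]))"
    by (rule mq_converges[OF qb l0 l1]) (use Lam_val g rb in auto)
  have ev: "mq q (map (sigma_j j \<gamma>) [0..<Suc m]) (map \<beta> [0..<Suc m])
      = qj q j \<beta> * mq q (map \<gamma> [0..<m]) (map (remove_j j \<beta>) [0..<m])"
    if "first_pos j \<beta> \<le> m" for m
    by (simp only: map_sigma_j mq_Cons decomp[OF c that] qj_cprod if_True)
  have "lim (\<lambda>m. mq q (map (sigma_j j \<gamma>) [0..<m]) (map \<beta> [0..<m]))
      = qj q j \<beta> * lim (\<lambda>m. mq q (map \<gamma> [0..<m]) (map (remove_j j \<beta>) [0..<m]))"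
    by (rule lim_scaled[OF conv, of "first_pos j \<beta>"]) (rule ev)
  then show ?thesis by (simp add: qinf_mq[OF fock gj b] qinf_mq[OF fock g rb])
qed

lemma qinf_sigma_j_zero:
  assumes fock: "fock_rep d q S \<Omega>" and j: "j \<in> {1..d}" and g: "\<gamma> \<in> Lam d" and b: "\<beta> \<in> Lam d"
    and c: "\<not> contains j \<beta>"
  shows "qinf S \<Omega> (sigma_j j \<gamma>) \<beta> = 0"
proof -
  have gj: "sigma_j j \<gamma> \<in> Lam d" using g j by (auto simp: Lam_def sigma_j_def split: nat.split)
  have nj: "(j \<in> set (map \<beta> xs)) = False" for xs using c by (auto simp: contains_def)
  have ev: "mq q (map (sigma_j j \<gamma>) [0..<Suc m]) (map \<beta> [0..<Suc m]) = 0" for m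
    by (simp only: map_sigma_j mq_Cons nj if_False)
  have "lim (\<lambda>m. mq q (map (sigma_j j \<gamma>) [0..<m]) (map \<beta> [0..<m])) = 0"
    by (rule lim_zero_ev) (rule ev)
  then show ?thesis by (simp add: qinf_mq[OF fock gj b])
qed

lemma contains_sigma_j: "i \<noteq> j \<Longrightarrow> contains i (sigma_j j \<beta>) = contains i \<beta>"
proof
  assume ij: "i \<noteq> j" and "contains i (sigma_j j \<beta>)"
  then obtain k where k: "sigma_j j \<beta> k = i" unfolding contains_def by blast
  then show "contains i \<beta>" using ij by (cases k) (auto simp: sigma_j_def contains_def)
next
  assume "contains i \<beta>"
  then obtain k where "\<beta> k = i" unfolding contains_def by blast
  then have "sigma_j j \<beta> (Suc k) = i" by (simp add: sigma_j_def)
  then show "contains i (sigma_j j \<beta>)" unfolding contains_def by blast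
qed

lemma first_pos_sigma_j:
  assumes ij: "i \<noteq> j" and c: "contains i \<beta>"
  shows "first_pos i (sigma_j j \<beta>) = Suc (first_pos i \<beta>)"
proof -
  obtain k where k: "\<beta> k = i" using c unfolding contains_def by blast
  have "(LEAST n. sigma_j j \<beta> n = i) = Suc (LEAST m. sigma_j j \<beta> (Suc m) = i)"
    by (rule Least_Suc[of _ "Suc k"]) (use k ij in \<open>auto simp: sigma_j_def\<close>)
  then show ?thesis by (simp add: first_pos_def sigma_j_def)
qed

lemma qj_sigma_j:
  assumes ij: "i \<noteq> j" and c: "contains i \<beta>"
  shows "qj q i (sigma_j j \<beta>) = q i j * qj q i \<beta>"
  unfolding qj_def first_pos_sigma_j[OF ij c] prod.lessThan_Suc_shift
  by (simp add: sigma_j_def)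

lemma remove_j_sigma_j:
  assumes ij: "i \<noteq> j" and c: "contains i \<beta>"
  shows "remove_j i (sigma_j j \<beta>) = sigma_j j (remove_j i \<beta>)"
proof
  fix k
  have fp: "first_pos i (sigma_j j \<beta>) = Suc (first_pos i \<beta>)" by (rule first_pos_sigma_j[OF ij c])
  show "remove_j i (sigma_j j \<beta>) k = sigma_j j (remove_j i \<beta>) k"
    by (cases k) (simp_all add: remove_j_def sigma_j_def fp fp[unfolded sigma_j_def])
qed

lemma contains_self: "contains j (sigma_j j \<beta>)"
  unfolding contains_def by (rule exI[of _ 0]) (simp add: sigma_j_def)

lemma first_pos_self: "first_pos j (sigma_j j \<beta>) = 0"
  unfolding first_pos_def by (rule Least_eq_0) (simp add: sigma_j_def)

lemma remove_j_self: "remove_j j (sigma_j j \<beta>) = \<beta>"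
  by (rule ext) (simp add: remove_j_def first_pos_self first_pos_self[unfolded sigma_j_def] sigma_j_def)

lemma qj_self: "qj q j (sigma_j j \<beta>) = 1"
  by (simp add: qj_def first_pos_self)

theorem mainTheorem3:
  fixes d :: nat and q :: "nat \<Rightarrow> nat \<Rightarrow> complex"
    and S :: "nat \<Rightarrow> 'f::chilbert \<Rightarrow> 'f" and \<Omega> :: 'f
    and \<alpha> :: "nat \<Rightarrow> nat" and e :: "(nat \<Rightarrow> nat) \<Rightarrow> 'h::chilbert"
  assumes d2: "d \<ge> 2"
    and q_small: "\<forall>i\<in>{1..d}. \<forall>j\<in>{1..d}. i \<noteq> j \<longrightarrow> norm (q i j) < 1"
    and q_herm: "\<forall>i\<in>{1..d}. \<forall>j\<in>{1..d}. i \<noteq> j \<longrightarrow> q i j = cnj (q j i)"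
    and fock: "fock_rep d q S \<Omega>"
    and alpha: "\<alpha> \<in> Lam d"
    and H: "is_H_alpha d S \<Omega> \<alpha> e"
  shows "(\<forall>j\<in>{1..d}. \<exists>!T. bounded_clinear T \<and>
            (\<forall>\<beta>\<in>equiv_class d \<alpha>. T (e \<beta>) = e (sigma_j j \<beta>))) \<and>
         (\<exists>P. (\<forall>j\<in>{1..d}. bounded_clinear (P j) \<and>
              (\<forall>\<beta>\<in>equiv_class d \<alpha>. P j (e \<beta>) = e (sigma_j j \<beta>)) \<and>
              (\<forall>\<beta>\<in>equiv_class d \<alpha>. cadjoint (P j) (e \<beta>) =
                  (if contains j \<beta> then scaleC (qj q j \<beta>) (e (remove_j j \<beta>)) else 0))) \<and>
            W_rep d q P)"
proof -
  let ?C = "equiv_class d \<alpha>"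
  have W: "W_rep d q S" and n1: "norm \<Omega> = 1" and Om: "\<forall>j\<in>{1..d}. cadjoint (S j) \<Omega> = 0"
    using fock unfolding fock_rep_def by auto
  have Hip: "cinner (e \<beta>) (e \<gamma>) = qinf S \<Omega> \<gamma> \<beta>" if "\<beta> \<in> ?C" "\<gamma> \<in> ?C" for \<beta> \<gamma>
    using H that unfolding is_H_alpha_def by blast
  have dense: "closure (cspan (e ` ?C)) = UNIV" using H unfolding is_H_alpha_def by blast
  have CL: "\<beta> \<in> Lam d" if "\<beta> \<in> ?C" for \<beta> using that by (simp add: equiv_class_def)
  obtain lam where l0: "0 \<le> lam" and l1: "lam < 1"
    and qb: "\<And>i j. i \<in> {1..d} \<Longrightarrow> j \<in> {1..d} \<Longrightarrow> i \<noteq> j \<Longrightarrow> cmod (q i j) \<le> lam"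
    using lam_exists[OF q_small] by blast
  have ext: "\<exists>T. bounded_clinear T \<and> (\<forall>\<beta>\<in>?C. T (e \<beta>) = e (sigma_j j \<beta>))" if j: "j \<in> {1..d}" for j
  proof (rule isometric_extension[OF dense])
    fix a b assume a: "a \<in> ?C" and b: "b \<in> ?C"
    have "cinner (e (sigma_j j a)) (e (sigma_j j b)) = qinf S \<Omega> (sigma_j j b) (sigma_j j a)"
      by (rule Hip[OF sigma_j_class[OF j a] sigma_j_class[OF j b]])
    also have "\<dots> = qinf S \<Omega> b a" by (rule qinf_sigma_j_both[OF fock j CL[OF b] CL[OF a]])
    also have "\<dots> = cinner (e a) (e b)" by (rule Hip[OF a b, symmetric])
    finally show "cinner (e (sigma_j j a)) (e (sigma_j j b)) = cinner (e a) (e b)" .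
  qed
  define P where "P j = (SOME T. bounded_clinear T \<and> (\<forall>\<beta>\<in>?C. T (e \<beta>) = e (sigma_j j \<beta>)))" for j
  have P: "bounded_clinear (P j) \<and> (\<forall>\<beta>\<in>?C. P j (e \<beta>) = e (sigma_j j \<beta>))" if "j \<in> {1..d}" for j
    unfolding P_def by (rule someI_ex[OF ext[OF that]])
  have Pb: "bounded_clinear (P j)" if "j \<in> {1..d}" for j using P[OF that] by blast
  have Pe: "P j (e \<beta>) = e (sigma_j j \<beta>)" if "j \<in> {1..d}" "\<beta> \<in> ?C" for j \<beta> using P[OF that(1)] that(2) by blast
  have part1: "\<forall>j\<in>{1..d}. \<exists>!T. bounded_clinear T \<and> (\<forall>\<beta>\<in>?C. T (e \<beta>) = e (sigma_j j \<beta>))"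
  proof (intro ballI ex_ex1I)
    fix j assume "j \<in> {1..d}"
    then show "\<exists>T. bounded_clinear T \<and> (\<forall>\<beta>\<in>?C. T (e \<beta>) = e (sigma_j j \<beta>))" by (rule ext)
  next
    fix j T1 T2
    assume h1: "bounded_clinear T1 \<and> (\<forall>\<beta>\<in>?C. T1 (e \<beta>) = e (sigma_j j \<beta>))"
      and h2: "bounded_clinear T2 \<and> (\<forall>\<beta>\<in>?C. T2 (e \<beta>) = e (sigma_j j \<beta>))"
    show "T1 = T2"
    proof (rule dense_eq[OF _ _ dense])
      show "bounded_clinear T1" "bounded_clinear T2" using h1 h2 by blast+
      show "\<forall>x\<in>e ` ?C. T1 x = T2 x" using h1 h2 by auto
    qed
  qed
  have adj: "cadjoint (P j) (e \<beta>) = (if contains j \<beta> then scaleC (qj q j \<beta>) (e (remove_j j \<beta>)) else 0)"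
    if j: "j \<in> {1..d}" and b: "\<beta> \<in> ?C" for j \<beta>
  proof (rule dense_cinner_right[OF dense], rule ballI)
    fix x assume "x \<in> e ` ?C"
    then obtain \<gamma> where g: "\<gamma> \<in> ?C" and x: "x = e \<gamma>" by blast
    have h1: "cinner x (cadjoint (P j) (e \<beta>)) = cinner (e (sigma_j j \<gamma>)) (e \<beta>)"
      using cadjoint_prop[OF Pb[OF j], of x "e \<beta>"] Pe[OF j g] x by simp
    have h2: "cinner (e (sigma_j j \<gamma>)) (e \<beta>) = cnj (qinf S \<Omega> (sigma_j j \<gamma>) \<beta>)"
    proof -
      have "cinner (e (sigma_j j \<gamma>)) (e \<beta>) = cnj (cinner (e \<beta>) (e (sigma_j j \<gamma>)))" by (rule cinner_commute)
      also have "cinner (e \<beta>) (e (sigma_j j \<gamma>)) = qinf S \<Omega> (sigma_j j \<gamma>) \<beta>"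
        by (rule Hip[OF b sigma_j_class[OF j g]])
      finally show ?thesis .
    qed
    show "cinner x (cadjoint (P j) (e \<beta>))
        = cinner x (if contains j \<beta> then scaleC (qj q j \<beta>) (e (remove_j j \<beta>)) else 0)"
    proof (cases "contains j \<beta>")
      case True
      have rC: "remove_j j \<beta> \<in> ?C" by (rule remove_j_class[OF b True])
      have q1: "qinf S \<Omega> (sigma_j j \<gamma>) \<beta> = qj q j \<beta> * qinf S \<Omega> \<gamma> (remove_j j \<beta>)"
        by (rule qinf_sigma_j_left[OF fock j CL[OF g] CL[OF b] True qb l0 l1])
      have q2: "qinf S \<Omega> \<gamma> (remove_j j \<beta>) = cinner (e (remove_j j \<beta>)) (e \<gamma>)"
        by (rule Hip[OF rC g, symmetric])
      have q3: "cnj (cinner (e (remove_j j \<beta>)) (e \<gamma>)) = cinner (e \<gamma>) (e (remove_j j \<beta>))"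
        by (rule cinner_commute[symmetric])
      have "cinner x (cadjoint (P j) (e \<beta>)) = cnj (qj q j \<beta>) * cinner (e \<gamma>) (e (remove_j j \<beta>))"
        by (simp only: h1 h2 q1 q2 complex_cnj_mult q3)
      then show ?thesis using True x by (simp add: cinner_scaleC_right)
    next
      case False
      have "qinf S \<Omega> (sigma_j j \<gamma>) \<beta> = 0" by (rule qinf_sigma_j_zero[OF fock j CL[OF g] CL[OF b] False])
      then show ?thesis using h1 h2 False by simp
    qed
  qed
  have AP: "cadjoint (P j) \<circ> P j = id" if j: "j \<in> {1..d}" for j
  proof (rule dense_eq[OF bclinear_comp[OF cadjoint_bclinear[OF Pb[OF j]] Pb[OF j]] bclinear_id dense], rule ballI)
    fix x assume "x \<in> e ` ?C"
    then obtain \<beta> where b: "\<beta> \<in> ?C" and x: "x = e \<beta>" by blast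
    have sC: "sigma_j j \<beta> \<in> ?C" by (rule sigma_j_class[OF j b])
    show "(cadjoint (P j) \<circ> P j) x = id x"
      using x Pe[OF j b] adj[OF j sC] by (simp add: contains_self qj_self remove_j_self scaleC_one)
  qed
  have APij: "cadjoint (P i) \<circ> P j = (\<lambda>x. scaleC (q i j) (P j (cadjoint (P i) x)))"
    if i: "i \<in> {1..d}" and j: "j \<in> {1..d}" and ij: "i \<noteq> j" for i j
  proof -
    have L1: "bounded_clinear (cadjoint (P i) \<circ> P j)"
      by (rule bclinear_comp[OF cadjoint_bclinear[OF Pb[OF i]] Pb[OF j]])
    have L2: "bounded_clinear (\<lambda>x. scaleC (q i j) (P j (cadjoint (P i) x)))"
      using bclinear_scale[OF bclinear_comp[OF Pb[OF j] cadjoint_bclinear[OF Pb[OF i]]], of "q i j"]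
      by (simp add: comp_def)
    show ?thesis
    proof (rule dense_eq[OF L1 L2 dense], rule ballI)
      fix x assume "x \<in> e ` ?C"
      then obtain \<beta> where b: "\<beta> \<in> ?C" and x: "x = e \<beta>" by blast
      have sC: "sigma_j j \<beta> \<in> ?C" by (rule sigma_j_class[OF j b])
      have lhs: "(cadjoint (P i) \<circ> P j) x = (if contains i (sigma_j j \<beta>)
          then scaleC (qj q i (sigma_j j \<beta>)) (e (remove_j i (sigma_j j \<beta>))) else 0)"
        using x Pe[OF j b] adj[OF i sC] by simp
      show "(cadjoint (P i) \<circ> P j) x = scaleC (q i j) (P j (cadjoint (P i) x))"
      proof (cases "contains i \<beta>")
        case True
        have rC: "remove_j i \<beta> \<in> ?C" by (rule remove_j_class[OF b True])
        have "(cadjoint (P i) \<circ> P j) x = scaleC (q i j * qj q i \<beta>) (e (sigma_j j (remove_j i \<beta>)))"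
          using lhs True by (simp add: contains_sigma_j[OF ij] qj_sigma_j[OF ij True] remove_j_sigma_j[OF ij True])
        also have "\<dots> = scaleC (q i j) (P j (cadjoint (P i) x))"
          using x adj[OF i b] True Pe[OF j rC]
          by (simp add: bclinear_scaleC[OF Pb[OF j]] scaleC_scaleC)
        finally show ?thesis .
      next
        case False
        have "(cadjoint (P i) \<circ> P j) x = 0" using lhs False by (simp add: contains_sigma_j[OF ij])
        also have "\<dots> = scaleC (q i j) (P j (cadjoint (P i) x))"
          using x adj[OF i b] False by (simp add: bclinear_zero[OF Pb[OF j]])
        finally show ?thesis .
      qed
    qed
  qed
  have "W_rep d q P" unfolding W_rep_def using Pb AP APij by blast
  moreover have "\<forall>j\<in>{1..d}. bounded_clinear (P j) \<and>
              (\<forall>\<beta>\<in>?C. P j (e \<beta>) = e (sigma_j j \<beta>)) \<and>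
              (\<forall>\<beta>\<in>?C. cadjoint (P j) (e \<beta>) =
                  (if contains j \<beta> then scaleC (qj q j \<beta>) (e (remove_j j \<beta>)) else 0))"
    using Pb Pe adj by blast
  ultimately show ?thesis using part1 by blast
qed


end
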